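(* There are universal constants $C>0$ and $M>0$ such that the following holds. Let $n\ge2$, $r\ge1$, $\rho=r/n$, and let $(\eta_t)$ be the ZRP with rate $1$ on $K_n$ with $r$ particles. Fix a vertex $v$ and suppose $\eta_0(v)\le2(\rho+1)$. Let $Z$ be the Lebesgue measure of $\{t<(\rho+1)^2:\eta_t(v)=0\}$. Then $\mathbf E(Z\wedge M(\rho+1))\ge C(\rho+1)$. *)

theory Defs
  imports "HOL-Probability.Probability"
begin

text \<open>
Zero-range process (ZRP) with constant rate 1 on the complete graph K_n,
vertices 0,...,n-1.  A configuration is a function eta :: nat => nat
(number of particles at each vertex).  Dynamics: every vertex carrying
at least one particle, independently at rate 1, sends one particle to a
uniformly chosen other vertex (neighbour in K_n).

We realise the process by the standard jump-chain / holding-time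
construction from an i.i.d. driving sequence
  omega k = (e_k, a_k, b_k),  e_k ~ Exp(1),  a_k, b_k ~ Unif(0,1).
In state eta with q = number of occupied vertices, the holding time is
e_k / q (i.e. Exp(q)), the emitting vertex is the a_k-uniform occupied
vertex and the receiving vertex is the b_k-uniform vertex different
from the emitting one.
\<close>

definition occupied :: "nat \<Rightarrow> (nat \<Rightarrow> nat) \<Rightarrow> nat set" where
  "occupied n eta = {i. i < n \<and> 0 < eta i}"

definition zrp_src :: "nat \<Rightarrow> (nat \<Rightarrow> nat) \<Rightarrow> real \<Rightarrow> nat" where
  "zrp_src n eta a =
     sorted_list_of_set (occupied n eta) ! nat \<lfloor>a * real (card (occupied n eta))\<rfloor>"

definition zrp_tgt :: "nat \<Rightarrow> nat \<Rightarrow> real \<Rightarrow> nat" where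
  "zrp_tgt n s b = sorted_list_of_set ({0..<n} - {s}) ! nat \<lfloor>b * real (n - 1)\<rfloor>"

definition zrp_step :: "nat \<Rightarrow> (nat \<Rightarrow> nat) \<Rightarrow> real \<Rightarrow> real \<Rightarrow> (nat \<Rightarrow> nat)" where
  "zrp_step n eta a b =
     (let s = zrp_src n eta a; t = zrp_tgt n s b
      in eta(s := eta s - 1, t := eta t + 1))"

definition zrp_drive :: "(real \<times> real \<times> real) measure" where
  "zrp_drive = density lborel (exponential_density 1) \<Otimes>\<^sub>M
     (uniform_measure lborel {0<..<1} \<Otimes>\<^sub>M uniform_measure lborel {0<..<1})"

definition zrp_space :: "(nat \<Rightarrow> real \<times> real \<times> real) measure" where
  "zrp_space = PiM UNIV (\<lambda>_. zrp_drive)"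

primrec zrp_chain :: "nat \<Rightarrow> (nat \<Rightarrow> nat) \<Rightarrow> (nat \<Rightarrow> real \<times> real \<times> real) \<Rightarrow> nat \<Rightarrow> (nat \<Rightarrow> nat)" where
  "zrp_chain n eta0 \<omega> 0 = eta0"
| "zrp_chain n eta0 \<omega> (Suc k) =
     zrp_step n (zrp_chain n eta0 \<omega> k) (fst (snd (\<omega> k))) (snd (snd (\<omega> k)))"

primrec zrp_jump :: "nat \<Rightarrow> (nat \<Rightarrow> nat) \<Rightarrow> (nat \<Rightarrow> real \<times> real \<times> real) \<Rightarrow> nat \<Rightarrow> real" where
  "zrp_jump n eta0 \<omega> 0 = 0"
| "zrp_jump n eta0 \<omega> (Suc k) =
     zrp_jump n eta0 \<omega> k + fst (\<omega> k) / real (card (occupied n (zrp_chain n eta0 \<omega> k)))"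

definition zrp :: "nat \<Rightarrow> (nat \<Rightarrow> nat) \<Rightarrow> real \<Rightarrow> (nat \<Rightarrow> real \<times> real \<times> real) \<Rightarrow> (nat \<Rightarrow> nat)" where
  "zrp n eta0 t \<omega> = zrp_chain n eta0 \<omega> (card {k. 1 \<le> k \<and> zrp_jump n eta0 \<omega> k \<le> t})"

end

theory Submission
  imports Defs
begin

definition good :: "nat \<Rightarrow> nat \<Rightarrow> (nat \<Rightarrow> nat) \<Rightarrow> bool" where
  "good n r eta \<longleftrightarrow> (\<forall>i. n \<le> i \<longrightarrow> eta i = 0) \<and> (\<Sum>i<n. eta i) = r"

lemma finite_occ[simp]: "finite (occupied n eta)"
  by (auto simp: occupied_def)

lemma occ_sub: "occupied n eta \<subseteq> {0..<n}"
  by (auto simp: occupied_def)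

lemma card_occ_le: "card (occupied n eta) \<le> n"
  using card_mono[OF _ occ_sub, of n eta] by simp

lemma card_occ_le_v: "v < n \<Longrightarrow> eta v = 0 \<Longrightarrow> card (occupied n eta) \<le> n - 1"
proof -
  assume a: "v < n" "eta v = 0"
  have "occupied n eta \<subseteq> {0..<n} - {v}" using a by (auto simp: occupied_def)
  from card_mono[OF _ this] a show ?thesis by simp
qed

lemma good_occ_pos:
  assumes "good n r eta" "1 \<le> r" shows "0 < card (occupied n eta)"
proof (rule ccontr)
  assume "\<not> 0 < card (occupied n eta)"
  then have "occupied n eta = {}" by simp
  then have "\<forall>i<n. eta i = 0" by (auto simp: occupied_def)
  then have "(\<Sum>i<n. eta i) = 0" by simp
  with assms show False by (simp add: good_def)
qed

lemma idx_lt: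
  fixes a :: real assumes "0 \<le> a" "a < 1" "0 < q"
  shows "nat \<lfloor>a * real q\<rfloor> < q"
proof -
  have "a * real q < real q" using assms by simp
  then have "\<lfloor>a * real q\<rfloor> < int q" by (simp add: floor_less_iff)
  moreover have "0 \<le> \<lfloor>a * real q\<rfloor>" using assms by simp
  ultimately show ?thesis by (simp add: nat_less_iff)
qed

lemma src_in:
  assumes "good n r eta" "1 \<le> r" "0 \<le> a" "a < 1"
  shows "zrp_src n eta a \<in> occupied n eta"
proof -
  have q: "0 < card (occupied n eta)" using good_occ_pos assms by blast
  have "nat \<lfloor>a * real (card (occupied n eta))\<rfloor> < length (sorted_list_of_set (occupied n eta))"
    using idx_lt[OF assms(3,4) q] by simp
  then show ?thesis unfolding zrp_src_def
    using nth_mem set_sorted_list_of_set[OF finite_occ] by metis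
qed

lemma tgt_in:
  assumes "s < n" "0 \<le> b" "b < 1" "2 \<le> n"
  shows "zrp_tgt n s b \<in> {0..<n} - {s}"
proof -
  have c: "card ({0..<n} - {s}) = n - 1" using assms by simp
  have "nat \<lfloor>b * real (n - 1)\<rfloor> < n - 1"
    by (rule idx_lt) (use assms in auto)
  then have "nat \<lfloor>b * real (n - 1)\<rfloor> < length (sorted_list_of_set ({0..<n} - {s}))"
    using c by (simp only: length_sorted_list_of_set)
  then show ?thesis unfolding zrp_tgt_def
    using nth_mem set_sorted_list_of_set[of "{0..<n} - {s}"] by (metis finite_Diff finite_atLeastLessThan)
qed

lemma step_facts:
  assumes "good n r eta" "1 \<le> r" "0 \<le> a" "a < 1" "0 \<le> b" "b < 1" "2 \<le> n"
  defines "s \<equiv> zrp_src n eta a" and "t \<equiv> zrp_tgt n (zrp_src n eta a) b"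
  shows "s < n" "t < n" "s \<noteq> t" "0 < eta s"
    "zrp_step n eta a b = eta(s := eta s - 1, t := eta t + 1)"
proof -
  have s: "s \<in> occupied n eta" using src_in assms unfolding s_def by blast
  then show "s < n" "0 < eta s" by (auto simp: occupied_def)
  then have "t \<in> {0..<n} - {s}" using tgt_in assms unfolding t_def s_def by blast
  then show "t < n" "s \<noteq> t" by auto
  show "zrp_step n eta a b = eta(s := eta s - 1, t := eta t + 1)"
    unfolding zrp_step_def s_def t_def Let_def by simp
qed

lemma sum_upd:
  fixes f :: "nat \<Rightarrow> nat"
  assumes "s < n" "t < n" "s \<noteq> t" "0 < f s"
  shows "(\<Sum>i<n. (f(s := f s - 1, t := f t + 1)) i) = (\<Sum>i<n. f i)"
proof -
  define g where "g = f(s := f s - 1, t := f t + 1)"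
  have e: "\<And>i. int (g i) = (int (f i) + (if i = t then 1 else 0)) - (if i = s then 1 else 0)"
    using assms by (auto simp: g_def of_nat_diff)
  have "int (\<Sum>i<n. g i) = (\<Sum>i<n. (int (f i) + (if i = t then 1 else 0)) - (if i = s then 1 else 0))"
    by (simp add: e)
  also have "\<dots> = (\<Sum>i<n. int (f i)) + (\<Sum>i<n. (if i = t then 1 else 0)) - (\<Sum>i<n. (if i = s then 1 else 0))"
    by (simp add: sum_subtractf sum.distrib)
  also have "\<dots> = int (\<Sum>i<n. f i)" using assms by simp
  finally show ?thesis unfolding g_def by linarith
qed

lemma good_step:
  assumes "good n r eta" "1 \<le> r" "0 \<le> a" "a < 1" "0 \<le> b" "b < 1" "2 \<le> n"
  shows "good n r (zrp_step n eta a b)"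
  using step_facts[OF assms] assms(1) sum_upd[of "zrp_src n eta a" n "zrp_tgt n (zrp_src n eta a) b" eta]
  unfolding good_def by auto

lemma step_v:
  assumes "good n r eta" "1 \<le> r" "0 \<le> a" "a < 1" "0 \<le> b" "b < 1" "2 \<le> n"
  shows "zrp_step n eta a b v = (if zrp_src n eta a = v then eta v - 1
      else if zrp_tgt n (zrp_src n eta a) b = v then eta v + 1 else eta v)"
  using step_facts[OF assms] by auto

type_synonym st = "(nat \<Rightarrow> nat) \<times> real \<times> real"

definition mstep :: "nat \<Rightarrow> nat \<Rightarrow> real \<Rightarrow> st \<Rightarrow> real \<times> real \<times> real \<Rightarrow> st" where
  "mstep n v T s w = (let eta = fst s; J = fst (snd s); Z = snd (snd s);
      h = fst w / real (card (occupied n eta))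
    in (zrp_step n eta (fst (snd w)) (snd (snd w)), J + h,
        Z + (if eta v = 0 then max 0 (min (J + h) T - J) else 0)))"

primrec mchain :: "nat \<Rightarrow> nat \<Rightarrow> real \<Rightarrow> st \<Rightarrow> (nat \<Rightarrow> real \<times> real \<times> real) \<Rightarrow> nat \<Rightarrow> st" where
  "mchain n v T s \<omega> 0 = s"
| "mchain n v T s \<omega> (Suc k) = mchain n v T (mstep n v T s (\<omega> 0)) (\<lambda>j. \<omega> (Suc j)) k"

lemma mchain_Suc': "mchain n v T s \<omega> (Suc k) = mstep n v T (mchain n v T s \<omega> k) (\<omega> k)"
proof (induction k arbitrary: s \<omega>)
  case 0
  show ?case by simp
next
  case (Suc k)
  have "mchain n v T s \<omega> (Suc (Suc k)) = mchain n v T (mstep n v T s (\<omega> 0)) (\<lambda>j. \<omega> (Suc j)) (Suc k)"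
    by (simp only: mchain.simps)
  also have "\<dots> = mstep n v T (mchain n v T (mstep n v T s (\<omega> 0)) (\<lambda>j. \<omega> (Suc j)) k) (\<omega> (Suc k))"
    by (simp only: Suc.IH)
  also have "\<dots> = mstep n v T (mchain n v T s \<omega> (Suc k)) (\<omega> (Suc k))"
    by (simp only: mchain.simps)
  finally show ?case .
qed

lemma mchain_zrp:
  "fst (mchain n v T (eta0, 0, Z0) \<omega> k) = zrp_chain n eta0 \<omega> k \<and>
   fst (snd (mchain n v T (eta0, 0, Z0) \<omega> k)) = zrp_jump n eta0 \<omega> k"
  by (induction k) (auto simp del: mchain.simps(2) simp: mchain_Suc' mstep_def Let_def)

lemma mchain_case_nat: "mchain n v T s (case_nat w \<omega>) (Suc k) = mchain n v T (mstep n v T s w) \<omega> k"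
  by simp

definition stp :: "nat \<Rightarrow> (nat \<Rightarrow> nat) \<Rightarrow> nat \<Rightarrow> nat \<Rightarrow> (nat \<Rightarrow> nat)" where
  "stp n eta i j = (let s = sorted_list_of_set (occupied n eta) ! i;
      t = sorted_list_of_set ({0..<n} - {s}) ! j in eta(s := eta s - 1, t := eta t + 1))"

lemma step_stp: "zrp_step n eta a b =
   stp n eta (nat \<lfloor>a * real (card (occupied n eta))\<rfloor>) (nat \<lfloor>b * real (n - 1)\<rfloor>)"
  by (simp add: zrp_step_def zrp_src_def zrp_tgt_def stp_def Let_def)

primrec reach :: "nat \<Rightarrow> (nat \<Rightarrow> nat) \<Rightarrow> nat \<Rightarrow> (nat \<Rightarrow> nat) set" where
  "reach n e 0 = {e}"
| "reach n e (Suc k) = (\<lambda>(eta, i, j). stp n eta i j) ` (reach n e k \<times> UNIV \<times> UNIV)"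

lemma countable_reach: "countable (reach n e k)"
  by (induction k) auto

lemma sets_drive: "sets zrp_drive = sets (borel \<Otimes>\<^sub>M borel \<Otimes>\<^sub>M (borel::real measure))"
  unfolding zrp_drive_def
  by (intro sets_pair_measure_cong) auto

lemma meas_omega[measurable]: "(\<lambda>\<omega>. \<omega> k) \<in> zrp_space \<rightarrow>\<^sub>M (borel \<Otimes>\<^sub>M borel \<Otimes>\<^sub>M (borel::real measure))"
proof -
  have "(\<lambda>\<omega>. \<omega> k) \<in> zrp_space \<rightarrow>\<^sub>M zrp_drive"
    unfolding zrp_space_def by (rule measurable_component_singleton) simp
  then show ?thesis using measurable_cong_sets[OF refl sets_drive] by blast
qed

lemma meas_coord[measurable]:
  "(\<lambda>\<omega>. fst (\<omega> k)) \<in> borel_measurable zrp_space"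
  "(\<lambda>\<omega>. fst (snd (\<omega> k))) \<in> borel_measurable zrp_space"
  "(\<lambda>\<omega>. snd (snd (\<omega> k))) \<in> borel_measurable zrp_space"
  using measurable_compose[OF meas_omega measurable_fst]
    measurable_compose[OF measurable_compose[OF meas_omega measurable_snd] measurable_fst]
    measurable_compose[OF measurable_compose[OF meas_omega measurable_snd] measurable_snd]
  by (auto simp: comp_def)

lemma meas_idx: "(\<lambda>\<omega>. nat \<lfloor>fst (snd (\<omega> k)) * c\<rfloor>) \<in> zrp_space \<rightarrow>\<^sub>M count_space UNIV"
   "(\<lambda>\<omega>. nat \<lfloor>snd (snd (\<omega> k)) * c\<rfloor>) \<in> zrp_space \<rightarrow>\<^sub>M count_space UNIV"
  by (rule measurable_compose[OF meas_coord(2)], measurable)+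

lemma meas_stp:
  assumes "e \<in> reach n e0 k"
  shows "(\<lambda>\<omega>. stp n e (nat \<lfloor>fst (snd (\<omega> k)) * real (card (occupied n e))\<rfloor>)
        (nat \<lfloor>snd (snd (\<omega> k)) * real (n - 1)\<rfloor>)) \<in> zrp_space \<rightarrow>\<^sub>M count_space (reach n e0 (Suc k))"
proof (rule measurable_compose_countable'[where I=UNIV and
    g="\<lambda>\<omega>. nat \<lfloor>fst (snd (\<omega> k)) * real (card (occupied n e))\<rfloor>"
    and f="\<lambda>i \<omega>. stp n e i (nat \<lfloor>snd (snd (\<omega> k)) * real (n - 1)\<rfloor>)"])
  fix i :: nat
  show "(\<lambda>\<omega>. stp n e i (nat \<lfloor>snd (snd (\<omega> k)) * real (n - 1)\<rfloor>)) \<in> zrp_space \<rightarrow>\<^sub>M count_space (reach n e0 (Suc k))"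
  proof (rule measurable_compose_countable'[where I=UNIV and
    g="\<lambda>\<omega>. nat \<lfloor>snd (snd (\<omega> k)) * real (n - 1)\<rfloor>" and f="\<lambda>j \<omega>. stp n e i j"])
    fix j :: nat
    show "(\<lambda>\<omega>. stp n e i j) \<in> zrp_space \<rightarrow>\<^sub>M count_space (reach n e0 (Suc k))"
      using assms by (intro measurable_const) (auto intro: image_eqI[where x="(e,i,j)"])
  qed (rule meas_idx, auto)
qed (rule meas_idx, auto)

lemma meas_chain:
  "(\<lambda>\<omega>. fst (mchain n v T s \<omega> k)) \<in> zrp_space \<rightarrow>\<^sub>M count_space (reach n (fst s) k) \<and>
   (\<lambda>\<omega>. fst (snd (mchain n v T s \<omega> k))) \<in> borel_measurable zrp_space \<and>
   (\<lambda>\<omega>. snd (snd (mchain n v T s \<omega> k))) \<in> borel_measurable zrp_space"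
proof (induction k)
  case 0
  then show ?case by (auto intro!: measurable_const)
next
  case (Suc k)
  let ?E = "\<lambda>\<omega>. fst (mchain n v T s \<omega> k)"
  let ?J = "\<lambda>\<omega>. fst (snd (mchain n v T s \<omega> k))"
  let ?Z = "\<lambda>\<omega>. snd (snd (mchain n v T s \<omega> k))"
  have E: "?E \<in> zrp_space \<rightarrow>\<^sub>M count_space (reach n (fst s) k)" and J[measurable]: "?J \<in> borel_measurable zrp_space"
    and Z[measurable]: "?Z \<in> borel_measurable zrp_space" using Suc by auto
  have 1: "(\<lambda>\<omega>. fst (mchain n v T s \<omega> (Suc k))) = (\<lambda>\<omega>. (\<lambda>e \<omega>. stp n e (nat \<lfloor>fst (snd (\<omega> k)) * real (card (occupied n e))\<rfloor>)
        (nat \<lfloor>snd (snd (\<omega> k)) * real (n - 1)\<rfloor>)) (?E \<omega>) \<omega>)"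
    by (simp del: mchain.simps(2) add: mchain_Suc' mstep_def Let_def step_stp)
  have 2: "(\<lambda>\<omega>. fst (snd (mchain n v T s \<omega> (Suc k)))) = (\<lambda>\<omega>. (\<lambda>e \<omega>. ?J \<omega> + fst (\<omega> k) / real (card (occupied n e))) (?E \<omega>) \<omega>)"
    by (simp del: mchain.simps(2) add: mchain_Suc' mstep_def Let_def)
  have 3: "(\<lambda>\<omega>. snd (snd (mchain n v T s \<omega> (Suc k)))) = (\<lambda>\<omega>. (\<lambda>e \<omega>. ?Z \<omega> + (if e v = 0 then max 0 (min (?J \<omega> + fst (\<omega> k) / real (card (occupied n e))) T - ?J \<omega>) else 0)) (?E \<omega>) \<omega>)"
    by (simp del: mchain.simps(2) add: mchain_Suc' mstep_def Let_def)
  have a: "(\<lambda>\<omega>. (\<lambda>e \<omega>. stp n e (nat \<lfloor>fst (snd (\<omega> k)) * real (card (occupied n e))\<rfloor>)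
        (nat \<lfloor>snd (snd (\<omega> k)) * real (n - 1)\<rfloor>)) (?E \<omega>) \<omega>) \<in> zrp_space \<rightarrow>\<^sub>M count_space (reach n (fst s) (Suc k))"
    by (rule measurable_compose_countable'[OF _ E countable_reach], rule meas_stp)
  have b: "(\<lambda>\<omega>. (\<lambda>e \<omega>. ?J \<omega> + fst (\<omega> k) / real (card (occupied n e))) (?E \<omega>) \<omega>) \<in> borel_measurable zrp_space"
    by (rule measurable_compose_countable'[where f="\<lambda>e \<omega>. ?J \<omega> + fst (\<omega> k) / real (card (occupied n e))", OF _ E countable_reach]) measurable
  have c: "(\<lambda>\<omega>. (\<lambda>e \<omega>. ?Z \<omega> + (if e v = 0 then max 0 (min (?J \<omega> + fst (\<omega> k) / real (card (occupied n e))) T - ?J \<omega>) else 0)) (?E \<omega>) \<omega>) \<in> borel_measurable zrp_space"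
    by (rule measurable_compose_countable'[where f="\<lambda>e \<omega>. ?Z \<omega> + (if e v = 0 then max 0 (min (?J \<omega> + fst (\<omega> k) / real (card (occupied n e))) T - ?J \<omega>) else 0)", OF _ E countable_reach]) measurable
  show ?case unfolding 1 2 3 using a b c by blast
qed

lemma meas_G:
  fixes G :: "st \<Rightarrow> ennreal"
  assumes "\<And>e. (\<lambda>x. G (e, x)) \<in> borel_measurable borel"
  shows "(\<lambda>\<omega>. G (mchain n v T s \<omega> k)) \<in> borel_measurable zrp_space"
proof -
  have E: "(\<lambda>\<omega>. fst (mchain n v T s \<omega> k)) \<in> zrp_space \<rightarrow>\<^sub>M count_space (reach n (fst s) k)"
   and J[measurable]: "(\<lambda>\<omega>. fst (snd (mchain n v T s \<omega> k))) \<in> borel_measurable zrp_space"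
   and Z[measurable]: "(\<lambda>\<omega>. snd (snd (mchain n v T s \<omega> k))) \<in> borel_measurable zrp_space"
    using meas_chain by blast+
  have "(\<lambda>\<omega>. G (mchain n v T s \<omega> k)) = (\<lambda>\<omega>. (\<lambda>e \<omega>. G (e, (fst (snd (mchain n v T s \<omega> k)), snd (snd (mchain n v T s \<omega> k))))) (fst (mchain n v T s \<omega> k)) \<omega>)"
    by simp
  also have "\<dots> \<in> borel_measurable zrp_space"
  proof (rule measurable_compose_countable'[OF _ E countable_reach])
    fix e
    have "(\<lambda>\<omega>. (fst (snd (mchain n v T s \<omega> k)), snd (snd (mchain n v T s \<omega> k)))) \<in> zrp_space \<rightarrow>\<^sub>M borel"
      unfolding borel_prod[symmetric] by measurable
    from measurable_compose[OF this assms[of e]]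
    show "(\<lambda>\<omega>. G (e, fst (snd (mchain n v T s \<omega> k)), snd (snd (mchain n v T s \<omega> k)))) \<in> borel_measurable zrp_space"
      by simp
  qed
  finally show ?thesis .
qed

abbreviation "Exd \<equiv> density lborel (\<lambda>x. ennreal (exponential_density 1 x))"
abbreviation "Unf \<equiv> uniform_measure lborel {0<..<(1::real)}"

lemma prob_Ex: "prob_space Exd"
  by (rule prob_space_exponential_density) simp

lemma prob_Un: "prob_space Unf"
  by (rule prob_space_uniform_measure) auto

lemma prob_drive: "prob_space zrp_drive"
  unfolding zrp_drive_def
  by (intro prob_space_pair prob_Ex prob_Un)

interpretation D: sequence_space zrp_drive
  by (intro sequence_space.intro product_prob_spaceI prob_drive)

lemma prob_space_zrp: "prob_space zrp_space"
  unfolding zrp_space_def by (rule D.prob_space_axioms)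

lemma split_space:
  assumes f: "f \<in> borel_measurable zrp_space"
  shows "(\<integral>\<^sup>+\<omega>. f \<omega> \<partial>zrp_space) = (\<integral>\<^sup>+w. \<integral>\<^sup>+\<omega>. f (case_nat w \<omega>) \<partial>zrp_space \<partial>zrp_drive)"
proof -
  have m: "(\<lambda>(s, \<omega>). case_nat s \<omega>) \<in> zrp_drive \<Otimes>\<^sub>M D.S \<rightarrow>\<^sub>M D.S"
    by measurable
  have "(\<integral>\<^sup>+\<omega>. f \<omega> \<partial>zrp_space) = (\<integral>\<^sup>+\<omega>. f \<omega> \<partial>distr (zrp_drive \<Otimes>\<^sub>M D.S) D.S (\<lambda>(s, \<omega>). case_nat s \<omega>))"
    unfolding D.PiM_iter zrp_space_def ..
  also have "\<dots> = (\<integral>\<^sup>+x. f (case_nat (fst x) (snd x)) \<partial>(zrp_drive \<Otimes>\<^sub>M D.S))"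
    using f unfolding zrp_space_def by (subst nn_integral_distr[OF m]) (auto simp: split_beta)
  also have "\<dots> = (\<integral>\<^sup>+w. \<integral>\<^sup>+\<omega>. f (case_nat w \<omega>) \<partial>D.S \<partial>zrp_drive)"
    using f unfolding zrp_space_def
    by (subst D.nn_integral_fst[symmetric]) (auto intro: measurable_compose[OF m])
  finally show ?thesis unfolding zrp_space_def .
qed

lemma exp_neg_lim:
  fixes c :: real assumes "0 < c"
  shows "((\<lambda>x. exp (- c * x)) \<longlongrightarrow> 0) at_top"
proof -
  have "LIM x at_top. (- c) * x :> at_bot"
    by (rule filterlim_tendsto_neg_mult_at_bot[OF tendsto_const]) (use assms in \<open>auto intro: filterlim_ident\<close>)
  from filterlim_compose[OF exp_at_bot this] show ?thesis by simp
qed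

lemma exp_laplace:
  fixes s :: real assumes s: "0 \<le> s"
  shows "(\<integral>\<^sup>+x. ennreal (exp (- s * x)) \<partial>Exd) = ennreal (1 / (1 + s))"
proof -
  have "(\<integral>\<^sup>+x. ennreal (exp (- s * x)) \<partial>Exd) = (\<integral>\<^sup>+x. ennreal (exponential_density 1 x) * ennreal (exp (- s * x)) \<partial>lborel)"
    by (subst nn_integral_density) auto
  also have "\<dots> = (\<integral>\<^sup>+x. ennreal (exp (- (1 + s) * x)) * indicator {0..} x \<partial>lborel)"
    by (intro nn_integral_cong) (auto simp: exponential_density_def ennreal_mult'[symmetric] exp_add[symmetric] algebra_simps split: split_indicator)
  also have "\<dots> = ennreal (0 - (- exp (- (1 + s) * 0) / (1 + s)))"
  proof (rule nn_integral_FTC_atLeast)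
    show "((\<lambda>x. - exp (- (1 + s) * x) / (1 + s)) \<longlongrightarrow> 0) at_top"
      using tendsto_divide[OF tendsto_minus[OF exp_neg_lim[of "1+s"]] tendsto_const[of "1+s"]] s by simp
    fix x :: real
    have "((\<lambda>x. - exp (- (1 + s) * x) / (1 + s)) has_real_derivative (- (exp (- (1 + s) * x) * (- (1 + s) * 1)) / (1 + s))) (at x)"
      by (rule derivative_eq_intros refl)+ (use s in auto)
    moreover have "(- (exp (- (1 + s) * x) * (- (1 + s) * 1)) / (1 + s)) = exp (- (1 + s) * x)"
    proof -
      have ne: "1 + s \<noteq> 0" using s by simp
      show ?thesis using ne by (simp add: field_simps)
    qed
    ultimately show "((\<lambda>x. - exp (- (1 + s) * x) / (1 + s)) has_real_derivative exp (- (1 + s) * x)) (at x)"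
      by simp
  qed auto
  finally show ?thesis using s by simp
qed

lemma exp_tail:
  fixes M :: real assumes "0 \<le> M"
  shows "emeasure Exd {M..} = ennreal (exp (- M))"
proof -
  have "emeasure Exd {M..} = (\<integral>\<^sup>+x. ennreal (exponential_density 1 x) * indicator {M..} x \<partial>lborel)"
    by (subst emeasure_density) auto
  also have "\<dots> = (\<integral>\<^sup>+x. ennreal (exp (- x)) * indicator {M..} x \<partial>lborel)"
    using assms by (intro nn_integral_cong) (auto simp: exponential_density_def split: split_indicator)
  also have "\<dots> = ennreal (0 - (- exp (- M)))"
  proof (rule nn_integral_FTC_atLeast[where F="\<lambda>x. - exp (- x)"])
    show "((\<lambda>x. - exp (- x)) \<longlongrightarrow> (0::real)) at_top"
      using tendsto_minus[OF exp_neg_lim[of 1]] by auto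
    fix x :: real
    show "((\<lambda>x. - exp (- x)) has_real_derivative exp (- x)) (at x)"
      by (auto intro!: derivative_eq_intros)
  qed auto
  finally show ?thesis by simp
qed

lemma exp_head:
  fixes M g :: real assumes M: "0 \<le> M"
  shows "\<exists>I\<ge>0. (\<integral>\<^sup>+x. ennreal (exp (g * x)) * indicator {..<M} x \<partial>Exd) = ennreal I
      \<and> exp ((g - 1) * M) = 1 + (g - 1) * I"
proof -
  define I where "I = integral {0..M} (\<lambda>x. exp ((g - 1) * x))"
  have int: "(\<lambda>x. exp ((g - 1) * x)) integrable_on {0..M}"
    by (rule integrable_continuous_interval) (intro continuous_intros)
  have hi: "((\<lambda>x. exp ((g - 1) * x)) has_integral I) {0..M}"
    unfolding I_def by (rule integrable_integral[OF int])
  have I0: "0 \<le> I" unfolding I_def by (rule integral_nonneg[OF int]) auto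
  have "(\<integral>\<^sup>+x. ennreal (exp (g * x)) * indicator {..<M} x \<partial>Exd)
      = (\<integral>\<^sup>+x. ennreal (exponential_density 1 x) * (ennreal (exp (g * x)) * indicator {..<M} x) \<partial>lborel)"
    by (subst nn_integral_density) auto
  also have "\<dots> = (\<integral>\<^sup>+x. ennreal (indicator {0..M} x * exp ((g - 1) * x)) \<partial>lborel)"
  proof (rule nn_integral_cong_AE)
    show "AE x in lborel. ennreal (exponential_density 1 x) * (ennreal (exp (g * x)) * indicator {..<M} x) =
        ennreal (indicator {0..M} x * exp ((g - 1) * x))"
      using AE_lborel_singleton[of M]
    proof eventually_elim
      case (elim x)
      show ?case
      proof (cases "0 \<le> x \<and> x < M")
        case True
        have d: "exponential_density 1 x = exp (- x)" using True by (simp add: exponential_density_def)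
        have i1: "indicator {..<M} x = (1::ennreal)" using True by simp
        have i2: "indicator {0..M} x = (1::real)" using True by simp
        have e: "exp (- x) * exp (g * x) = exp ((g - 1) * x)"
          by (simp add: exp_add[symmetric] algebra_simps)
        have "ennreal (exp (- x)) * (ennreal (exp (g * x)) * 1) = ennreal (exp (- x) * exp (g * x))"
          by (simp add: ennreal_mult)
        then show ?thesis unfolding d i1 i2 e by simp
      next
        case False
        then have "x < 0 \<or> M < x" using elim by auto
        then show ?thesis
        proof
          assume x: "x < 0"
          have "exponential_density 1 x = 0" using x by (simp add: exponential_density_def)
          moreover have "indicator {0..M} x = (0::real)" using x by simp
          ultimately show ?thesis by simp
        next
          assume x: "M < x"
          have "indicator {..<M} x = (0::ennreal)" using x by simp
          moreover have "indicator {0..M} x = (0::real)" using x by simp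
          ultimately show ?thesis by simp
        qed
      qed
    qed
  qed
  also have "\<dots> = ennreal I"
    by (rule nn_integral_has_integral_lebesgue[OF _ hi]) auto
  finally have 1: "(\<integral>\<^sup>+x. ennreal (exp (g * x)) * indicator {..<M} x \<partial>Exd) = ennreal I" .
  have d: "((\<lambda>x. exp ((g - 1) * x)) has_vector_derivative ((g - 1) * exp ((g - 1) * x))) (at x within {0..M})" for x
  proof -
    have "((\<lambda>x. exp ((g - 1) * x)) has_real_derivative (exp ((g - 1) * x) * (0 * x + 1 * (g - 1)))) (at x)"
      by (rule derivative_eq_intros refl)+
    then have "((\<lambda>x. exp ((g - 1) * x)) has_real_derivative ((g - 1) * exp ((g - 1) * x))) (at x)"
      by (simp add: mult.commute)
    then show ?thesis
      by (simp add: has_real_derivative_iff_has_vector_derivative has_vector_derivative_at_within)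
  qed
  have ftc: "((\<lambda>x. (g - 1) * exp ((g - 1) * x)) has_integral (exp ((g - 1) * M) - exp ((g - 1) * 0))) {0..M}"
    by (rule fundamental_theorem_of_calculus[OF M]) (rule d)
  have hm: "((\<lambda>x. (g - 1) * exp ((g - 1) * x)) has_integral ((g - 1) * I)) {0..M}"
    by (rule has_integral_mult_right[OF hi])
  have "exp ((g - 1) * M) - exp ((g - 1) * 0) = (g - 1) * I"
    by (rule has_integral_unique[OF ftc hm])
  then have "exp ((g - 1) * M) - 1 = (g - 1) * I" by simp
  then show ?thesis using 1 I0 by (intro exI[of _ I]) auto
qed

lemma unif_interval:
  fixes q i :: nat assumes "i < q"
  shows "emeasure Unf {a. nat \<lfloor>a * real q\<rfloor> = i} = ennreal (1 / real q)"
proof -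
  have q: "0 < q" using assms by simp
  let ?A = "{a::real. nat \<lfloor>a * real q\<rfloor> = i}"
  have mA: "?A \<in> sets lborel" by measurable
  have "emeasure Unf ?A = emeasure lborel ({0<..<1} \<inter> ?A) / emeasure lborel {0<..<(1::real)}"
    by (rule emeasure_uniform_measure) (auto simp: mA)
  also have "emeasure lborel {0<..<(1::real)} = 1" by simp
  also have "emeasure lborel ({0<..<1} \<inter> ?A) = ennreal (1 / real q)"
  proof (rule antisym)
    have "{0<..<1} \<inter> ?A \<subseteq> {real i / q .. (real i + 1) / q}"
    proof
      fix a assume a: "a \<in> {0<..<1} \<inter> ?A"
      then have "\<lfloor>a * real q\<rfloor> = int i" using q by auto
      then have "real i \<le> a * q" "a * q < real i + 1" by linarith+
      then show "a \<in> {real i / q .. (real i + 1) / q}" using q by (auto simp: field_simps)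
    qed
    then have "emeasure lborel ({0<..<1} \<inter> ?A) \<le> emeasure lborel {real i / q .. (real i + 1) / q}"
      by (intro emeasure_mono; simp)
    also have "\<dots> = ennreal (1 / real q)" using q by (simp add: field_simps diff_divide_distrib)
    finally show "emeasure lborel ({0<..<1} \<inter> ?A) \<le> ennreal (1 / real q)" .
    have "{real i / q <..< (real i + 1) / q} \<subseteq> {0<..<1} \<inter> ?A"
    proof
      fix a assume a: "a \<in> {real i / q <..< (real i + 1) / q}"
      then have 1: "real i < a * q" "a * q < real i + 1" using q by (auto simp: field_simps)
      then have "\<lfloor>a * real q\<rfloor> = int i" by linarith
      moreover have "0 < a" using 1 q by (smt (verit) of_nat_0_le_iff zero_less_mult_pos2 of_nat_0_less_iff)
      moreover have "a < 1"
      proof -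
        have "real i + 1 \<le> real q" using assms by linarith
        then have "a * q < q" using 1 by linarith
        then show ?thesis using q by simp
      qed
      ultimately show "a \<in> {0<..<1} \<inter> ?A" by auto
    qed
    then have "emeasure lborel {real i / q <..< (real i + 1) / q} \<le> emeasure lborel ({0<..<1} \<inter> ?A)"
      by (intro emeasure_mono) (auto simp: mA)
    moreover have "emeasure lborel {real i / q <..< (real i + 1) / q} = ennreal (1 / real q)"
      using q by (simp add: field_simps diff_divide_distrib)
    ultimately show "ennreal (1 / real q) \<le> emeasure lborel ({0<..<1} \<inter> ?A)" by simp
  qed
  finally show ?thesis by (simp add: divide_ennreal_def)
qed

lemma unif_sum:
  fixes q :: nat and f :: "nat \<Rightarrow> ennreal" assumes q: "0 < q"
  shows "(\<integral>\<^sup>+a. f (nat \<lfloor>a * real q\<rfloor>) \<partial>Unf) = (\<Sum>i<q. f i * ennreal (1 / real q))"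
proof -
  have "AE a in Unf. a \<in> {0<..<1}"
    by (rule AE_uniform_measureI) auto
  then have "AE a in Unf. f (nat \<lfloor>a * real q\<rfloor>) = (\<Sum>i<q. f i * indicator {a. nat \<lfloor>a * real q\<rfloor> = i} a)"
  proof eventually_elim
    case (elim a)
    have "nat \<lfloor>a * real q\<rfloor> < q" using elim q by (intro idx_lt) auto
    have "(\<Sum>i<q. f i * indicator {a. nat \<lfloor>a * real q\<rfloor> = i} a) = (\<Sum>i<q. (if nat \<lfloor>a * real q\<rfloor> = i then f i else 0))"
      by (intro sum.cong) (auto simp: indicator_def)
    also have "\<dots> = f (nat \<lfloor>a * real q\<rfloor>)" using \<open>nat \<lfloor>a * real q\<rfloor> < q\<close> by (simp add: sum.delta')
    finally have "(\<Sum>i<q. f i * indicator {a. nat \<lfloor>a * real q\<rfloor> = i} a) = f (nat \<lfloor>a * real q\<rfloor>)" .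
    then show ?case by simp
  qed
  then have "(\<integral>\<^sup>+a. f (nat \<lfloor>a * real q\<rfloor>) \<partial>Unf) = (\<integral>\<^sup>+a. (\<Sum>i<q. f i * indicator {a. nat \<lfloor>a * real q\<rfloor> = i} a) \<partial>Unf)"
    by (rule nn_integral_cong_AE)
  also have "\<dots> = (\<Sum>i<q. (\<integral>\<^sup>+a. f i * indicator {a. nat \<lfloor>a * real q\<rfloor> = i} a \<partial>Unf))"
    by (rule nn_integral_sum) measurable
  also have "\<dots> = (\<Sum>i<q. f i * emeasure Unf {a. nat \<lfloor>a * real q\<rfloor> = i})"
    by (intro sum.cong refl nn_integral_cmult_indicator) measurable
  also have "\<dots> = (\<Sum>i<q. f i * ennreal (1 / real q))"
    by (intro sum.cong refl) (simp del: emeasure_uniform_measure add: unif_interval)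
  finally show ?thesis .
qed

lemma sets_Exd[measurable_cong]: "sets Exd = sets borel" by simp
lemma sets_Unf[measurable_cong]: "sets Unf = sets borel" by simp

lemma prob_UU: "prob_space (Unf \<Otimes>\<^sub>M Unf)"
  by (intro prob_space_pair prob_Un)

lemma prod_int:
  assumes F[measurable]: "F \<in> borel_measurable borel" and G[measurable]: "G \<in> borel_measurable (Unf \<Otimes>\<^sub>M Unf)"
  shows "(\<integral>\<^sup>+w. F (fst w) * G (snd w) \<partial>zrp_drive) = (\<integral>\<^sup>+x. F x \<partial>Exd) * (\<integral>\<^sup>+y. G y \<partial>(Unf \<Otimes>\<^sub>M Unf))"
proof -
  interpret UU: prob_space "Unf \<Otimes>\<^sub>M Unf" by (rule prob_UU)
  have FE[measurable]: "F \<in> borel_measurable Exd" by simp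
  have "(\<integral>\<^sup>+w. F (fst w) * G (snd w) \<partial>zrp_drive) = (\<integral>\<^sup>+x. \<integral>\<^sup>+y. F x * G y \<partial>(Unf \<Otimes>\<^sub>M Unf) \<partial>Exd)"
    unfolding zrp_drive_def
  proof (subst UU.nn_integral_fst[symmetric])
    have m1[measurable]: "(\<lambda>w. F (fst w)) \<in> borel_measurable (Exd \<Otimes>\<^sub>M (Unf \<Otimes>\<^sub>M Unf))"
      using measurable_compose[OF measurable_fst FE] by (simp add: comp_def)
    have m2[measurable]: "(\<lambda>w. G (snd w)) \<in> borel_measurable (Exd \<Otimes>\<^sub>M (Unf \<Otimes>\<^sub>M Unf))"
      using measurable_compose[OF measurable_snd G] by (simp add: comp_def)
    show "(\<lambda>w. F (fst w) * G (snd w)) \<in> borel_measurable (Exd \<Otimes>\<^sub>M (Unf \<Otimes>\<^sub>M Unf))"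
      by measurable
  qed simp
  also have "\<dots> = (\<integral>\<^sup>+x. F x * (\<integral>\<^sup>+y. G y \<partial>(Unf \<Otimes>\<^sub>M Unf)) \<partial>Exd)"
    by (intro nn_integral_cong nn_integral_cmult) simp
  also have "\<dots> = (\<integral>\<^sup>+x. F x \<partial>Exd) * (\<integral>\<^sup>+y. G y \<partial>(Unf \<Otimes>\<^sub>M Unf))"
    by (rule nn_integral_multc) simp
  finally show ?thesis .
qed

lemma meas_ab:
  fixes \<psi> :: "(nat \<Rightarrow> nat) \<Rightarrow> ennreal"
  shows "(\<lambda>p. \<psi> (stp n eta (nat \<lfloor>fst p * c1\<rfloor>) (nat \<lfloor>snd p * c2\<rfloor>))) \<in> borel_measurable (Unf \<Otimes>\<^sub>M Unf)"
proof (rule measurable_compose_countable'[where I=UNIV and g="\<lambda>p. nat \<lfloor>fst p * c1\<rfloor>"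
    and f="\<lambda>i p. \<psi> (stp n eta i (nat \<lfloor>snd p * c2\<rfloor>))"])
  fix i :: nat
  show "(\<lambda>p. \<psi> (stp n eta i (nat \<lfloor>snd p * c2\<rfloor>))) \<in> borel_measurable (Unf \<Otimes>\<^sub>M Unf)"
    apply (rule measurable_compose_countable'[where I=UNIV and g="\<lambda>p. nat \<lfloor>snd p * c2\<rfloor>"
       and f="\<lambda>j p. \<psi> (stp n eta i j)"])
      apply (rule measurable_const; simp)
     apply measurable
    done
next
  show "(\<lambda>p. nat \<lfloor>fst p * c1\<rfloor>) \<in> Unf \<Otimes>\<^sub>M Unf \<rightarrow>\<^sub>M count_space UNIV"
    using measurable_compose[OF measurable_fst, of "\<lambda>x. nat \<lfloor>x * c1\<rfloor>" Unf Unf "count_space UNIV"]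
    by (simp add: comp_def)
qed simp

lemma src_avg:
  assumes "good n r eta" "1 \<le> r"
  shows "(\<integral>\<^sup>+a. g (zrp_src n eta a) \<partial>Unf) = (\<Sum>u\<in>occupied n eta. g u) * ennreal (1 / real (card (occupied n eta)))"
proof -
  define xs where "xs = sorted_list_of_set (occupied n eta)"
  define q where "q = card (occupied n eta)"
  have q: "0 < q" unfolding q_def using good_occ_pos assms by blast
  have "(\<integral>\<^sup>+a. g (zrp_src n eta a) \<partial>Unf) = (\<integral>\<^sup>+a. (\<lambda>i. g (xs ! i)) (nat \<lfloor>a * real q\<rfloor>) \<partial>Unf)"
    by (simp add: zrp_src_def xs_def q_def)
  also have "\<dots> = (\<Sum>i<q. g (xs ! i) * ennreal (1 / real q))" by (rule unif_sum[OF q])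
  also have "\<dots> = (\<Sum>i<q. g (xs ! i)) * ennreal (1 / real q)" by (simp add: sum_distrib_right)
  also have "(\<Sum>i<q. g (xs ! i)) = (\<Sum>u\<in>occupied n eta. g u)"
    by (rule sum.reindex_bij_betw[OF bij_betw_nth]) (auto simp: xs_def q_def)
  finally show ?thesis by (simp add: q_def)
qed

lemma tgt_avg:
  assumes "s < n" "2 \<le> n"
  shows "(\<integral>\<^sup>+b. g (zrp_tgt n s b) \<partial>Unf) = (\<Sum>u\<in>{0..<n} - {s}. g u) * ennreal (1 / real (n - 1))"
proof -
  define xs where "xs = sorted_list_of_set ({0..<n} - {s})"
  have c: "card ({0..<n} - {s}) = n - 1" using assms by simp
  have q: "0 < n - 1" using assms by simp
  have "(\<integral>\<^sup>+b. g (zrp_tgt n s b) \<partial>Unf) = (\<integral>\<^sup>+b. (\<lambda>i. g (xs ! i)) (nat \<lfloor>b * real (n - 1)\<rfloor>) \<partial>Unf)"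
    by (simp add: zrp_tgt_def xs_def)
  also have "\<dots> = (\<Sum>i<n - 1. g (xs ! i) * ennreal (1 / real (n - 1)))" by (rule unif_sum[OF q])
  also have "\<dots> = (\<Sum>i<n - 1. g (xs ! i)) * ennreal (1 / real (n - 1))" by (simp add: sum_distrib_right)
  also have "(\<Sum>i<n - 1. g (xs ! i)) = (\<Sum>u\<in>{0..<n} - {s}. g u)"
    by (rule sum.reindex_bij_betw[OF bij_betw_nth]) (auto simp: xs_def c)
  finally show ?thesis .
qed

definition hfun :: "nat \<Rightarrow> real \<Rightarrow> nat \<Rightarrow> nat \<Rightarrow> nat \<Rightarrow> real" where
  "hfun n \<mu> x v u = (if u = v then exp (- \<mu> * (real x - 1))
     else (exp (- \<mu> * (real x + 1)) + (real n - 2) * exp (- \<mu> * real x)) / (real n - 1))"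

lemma hfun_nonneg: "2 \<le> n \<Longrightarrow> 0 \<le> hfun n \<mu> x v u"
  unfolding hfun_def by (auto intro!: divide_nonneg_pos add_nonneg_nonneg)

lemma AE_Unf: "AE b in Unf. 0 < b \<and> b < 1"
  by (rule AE_uniform_measureI) auto

lemma inner_b:
  assumes g: "good n r eta" and r: "1 \<le> r" and n: "2 \<le> n" and v: "v < n" and a: "0 \<le> a" "a < 1"
  shows "(\<integral>\<^sup>+b. ennreal (exp (- \<mu> * real (zrp_step n eta a b v))) \<partial>Unf) = ennreal (hfun n \<mu> (eta v) v (zrp_src n eta a))"
proof -
  interpret U: prob_space Unf by (rule prob_Un)
  define s where "s = zrp_src n eta a"
  have s: "s \<in> occupied n eta" unfolding s_def using src_in[OF g r a] .
  then have sn: "s < n" and s0: "0 < eta s" by (auto simp: occupied_def)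
  show ?thesis
  proof (cases "s = v")
    case True
    have "AE b in Unf. ennreal (exp (- \<mu> * real (zrp_step n eta a b v))) = ennreal (exp (- \<mu> * (real (eta v) - 1)))"
      using AE_Unf
    proof eventually_elim
      case (elim b)
      have "zrp_step n eta a b v = eta v - 1"
        using step_v[OF g r a _ _ n, of b v] elim True by (auto simp: s_def)
      then show ?case using s0 True by (simp add: of_nat_diff)
    qed
    then have "(\<integral>\<^sup>+b. ennreal (exp (- \<mu> * real (zrp_step n eta a b v))) \<partial>Unf) = (\<integral>\<^sup>+b. ennreal (exp (- \<mu> * (real (eta v) - 1))) \<partial>Unf)"
      by (rule nn_integral_cong_AE)
    also have "\<dots> = ennreal (exp (- \<mu> * (real (eta v) - 1)))"
      by (simp add: U.emeasure_space_1)
    finally show ?thesis using True by (simp add: hfun_def s_def)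
  next
    case False
    define gg where "gg u = exp (- \<mu> * (if u = v then real (eta v) + 1 else real (eta v)))" for u
    have "AE b in Unf. ennreal (exp (- \<mu> * real (zrp_step n eta a b v))) = ennreal (gg (zrp_tgt n s b))"
      using AE_Unf
    proof eventually_elim
      case (elim b)
      have "zrp_step n eta a b v = (if zrp_tgt n s b = v then eta v + 1 else eta v)"
        using step_v[OF g r a _ _ n, of b v] elim False by (auto simp: s_def)
      then show ?case by (simp add: gg_def)
    qed
    then have "(\<integral>\<^sup>+b. ennreal (exp (- \<mu> * real (zrp_step n eta a b v))) \<partial>Unf) = (\<integral>\<^sup>+b. ennreal (gg (zrp_tgt n s b)) \<partial>Unf)"
      by (rule nn_integral_cong_AE)
    also have "\<dots> = (\<Sum>u\<in>{0..<n} - {s}. ennreal (gg u)) * ennreal (1 / real (n - 1))"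
      by (rule tgt_avg[OF sn n])
    also have "(\<Sum>u\<in>{0..<n} - {s}. ennreal (gg u)) = ennreal (\<Sum>u\<in>{0..<n} - {s}. gg u)"
      by (rule sum_ennreal) (simp add: gg_def)
    also have "(\<Sum>u\<in>{0..<n} - {s}. gg u) = gg v + (\<Sum>u\<in>{0..<n} - {s} - {v}. gg u)"
      using False v by (subst sum.remove[of _ v]) auto
    also have "(\<Sum>u\<in>{0..<n} - {s} - {v}. gg u) = (\<Sum>u\<in>{0..<n} - {s} - {v}. exp (- \<mu> * real (eta v)))"
      by (rule sum.cong) (auto simp: gg_def)
    also have "\<dots> = (real n - 2) * exp (- \<mu> * real (eta v))"
    proof -
      have "card ({0..<n} - {s} - {v}) = n - 2" using False v sn by (simp add: card_Diff_subset)
      then show ?thesis using n by (simp add: of_nat_diff)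
    qed
    also have "ennreal (gg v + (real n - 2) * exp (- \<mu> * real (eta v))) * ennreal (1 / real (n - 1))
        = ennreal ((gg v + (real n - 2) * exp (- \<mu> * real (eta v))) / (real n - 1))"
      using n by (subst ennreal_mult''[symmetric]) (auto simp: of_nat_diff)
    finally show ?thesis using False by (simp add: hfun_def gg_def s_def)
  qed
qed

lemma meas_Phi: "(\<lambda>p. ennreal (exp (- \<mu> * real (zrp_step n eta (fst p) (snd p) v)))) \<in> borel_measurable (Unf \<Otimes>\<^sub>M Unf)"
  unfolding step_stp
  using meas_ab[of "\<lambda>e. ennreal (exp (- \<mu> * real (e v)))" n eta "real (card (occupied n eta))" "real (n - 1)"]
  by simp

lemma EX_formula:
  assumes g: "good n r eta" and r: "1 \<le> r" and n: "2 \<le> n" and v: "v < n"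
  shows "(\<integral>\<^sup>+p. ennreal (exp (- \<mu> * real (zrp_step n eta (fst p) (snd p) v))) \<partial>(Unf \<Otimes>\<^sub>M Unf))
     = ennreal ((\<Sum>u\<in>occupied n eta. hfun n \<mu> (eta v) v u) / real (card (occupied n eta)))"
proof -
  interpret U: prob_space Unf by (rule prob_Un)
  have q: "0 < card (occupied n eta)" using good_occ_pos[OF g r] .
  have "(\<integral>\<^sup>+p. ennreal (exp (- \<mu> * real (zrp_step n eta (fst p) (snd p) v))) \<partial>(Unf \<Otimes>\<^sub>M Unf))
     = (\<integral>\<^sup>+a. \<integral>\<^sup>+b. ennreal (exp (- \<mu> * real (zrp_step n eta a b v))) \<partial>Unf \<partial>Unf)"
    using U.nn_integral_fst[OF meas_Phi[of \<mu> n eta v]] by simp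
  also have "\<dots> = (\<integral>\<^sup>+a. ennreal (hfun n \<mu> (eta v) v (zrp_src n eta a)) \<partial>Unf)"
  proof (rule nn_integral_cong_AE)
    show "AE a in Unf. (\<integral>\<^sup>+b. ennreal (exp (- \<mu> * real (zrp_step n eta a b v))) \<partial>Unf) = ennreal (hfun n \<mu> (eta v) v (zrp_src n eta a))"
      using AE_Unf
    proof eventually_elim
      case (elim a)
      show ?case by (rule inner_b[OF g r n v]) (use elim in auto)
    qed
  qed
  also have "\<dots> = (\<Sum>u\<in>occupied n eta. ennreal (hfun n \<mu> (eta v) v u)) * ennreal (1 / real (card (occupied n eta)))"
    by (rule src_avg[OF g r])
  also have "\<dots> = ennreal ((\<Sum>u\<in>occupied n eta. hfun n \<mu> (eta v) v u) / real (card (occupied n eta)))"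
    using n q by (subst sum_ennreal) (auto simp: hfun_nonneg ennreal_mult''[symmetric] intro!: sum_nonneg)
  finally show ?thesis .
qed

lemma sum_hfun_in:
  assumes "v \<in> A" "finite A"
  shows "(\<Sum>u\<in>A. hfun n \<mu> x v u) = exp (- \<mu> * (real x - 1)) +
     (real (card A) - 1) * ((exp (- \<mu> * (real x + 1)) + (real n - 2) * exp (- \<mu> * real x)) / (real n - 1))"
proof -
  have "(\<Sum>u\<in>A. hfun n \<mu> x v u) = hfun n \<mu> x v v + (\<Sum>u\<in>A - {v}. hfun n \<mu> x v u)"
    using assms by (subst sum.remove[of _ v]) auto
  also have "(\<Sum>u\<in>A - {v}. hfun n \<mu> x v u) = (\<Sum>u\<in>A - {v}. (exp (- \<mu> * (real x + 1)) + (real n - 2) * exp (- \<mu> * real x)) / (real n - 1))"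
    by (rule sum.cong) (auto simp: hfun_def)
  also have "\<dots> = real (card (A - {v})) * ((exp (- \<mu> * (real x + 1)) + (real n - 2) * exp (- \<mu> * real x)) / (real n - 1))"
    by simp
  also have "real (card (A - {v})) = real (card A) - 1"
  proof -
    have "0 < card A" using assms card_gt_0_iff by blast
    then show ?thesis using assms by (simp add: of_nat_diff)
  qed
  finally show ?thesis by (simp add: hfun_def)
qed

lemma sum_hfun_notin:
  assumes "v \<notin> A"
  shows "(\<Sum>u\<in>A. hfun n \<mu> x v u) =
     real (card A) * ((exp (- \<mu> * (real x + 1)) + (real n - 2) * exp (- \<mu> * real x)) / (real n - 1))"
proof -
  have "(\<Sum>u\<in>A. hfun n \<mu> x v u) = (\<Sum>u\<in>A. (exp (- \<mu> * (real x + 1)) + (real n - 2) * exp (- \<mu> * real x)) / (real n - 1))"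
    using assms by (intro sum.cong) (auto simp: hfun_def)
  then show ?thesis by simp
qed

lemma ineq_pos:
  fixes P E F q n :: real
  assumes P: "0 < P" and F: "0 \<le> F" "F \<le> 1" and q: "1 \<le> q" "q \<le> n" and n: "2 \<le> n"
  shows "P * (1 + (E + F - 2) / q) \<le> (P * E + (q - 1) * ((P * F + (n - 2) * P) / (n - 1))) / q"
proof -
  have d: "(P * E + (q - 1) * ((P * F + (n - 2) * P) / (n - 1))) / q - P * (1 + (E + F - 2) / q)
      = P * (n - q) * (1 - F) / ((n - 1) * q)"
    using q n by (simp add: field_simps)
  have "0 \<le> P * (n - q) * (1 - F) / ((n - 1) * q)"
    using P F q n by (intro divide_nonneg_pos mult_nonneg_nonneg) auto
  then show ?thesis using d by linarith
qed

lemma EX_pos: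
  assumes g: "good n r eta" and r: "1 \<le> r" and n: "2 \<le> n" and v: "v < n" and X: "0 < eta v" and mu: "0 \<le> \<mu>"
  shows "ennreal (exp (- \<mu> * real (eta v)) * (1 + (exp \<mu> + exp (- \<mu>) - 2) / real (card (occupied n eta))))
     \<le> (\<integral>\<^sup>+p. ennreal (exp (- \<mu> * real (zrp_step n eta (fst p) (snd p) v))) \<partial>(Unf \<Otimes>\<^sub>M Unf))"
proof -
  define q where "q = card (occupied n eta)"
  define P where "P = exp (- \<mu> * real (eta v))"
  have q1: "1 \<le> q" using good_occ_pos[OF g r] by (simp add: q_def)
  have qn: "q \<le> n" unfolding q_def by (rule card_occ_le)
  have vin: "v \<in> occupied n eta" using v X by (simp add: occupied_def)
  have e1: "exp (- \<mu> * (real (eta v) - 1)) = P * exp \<mu>" unfolding P_def by (simp add: exp_add[symmetric] algebra_simps)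
  have e2: "exp (- \<mu> * (real (eta v) + 1)) = P * exp (- \<mu>)" unfolding P_def by (simp add: exp_add[symmetric] algebra_simps)
  have "P * (1 + (exp \<mu> + exp (- \<mu>) - 2) / real q) \<le>
     (P * exp \<mu> + (real q - 1) * ((P * exp (- \<mu>) + (real n - 2) * P) / (real n - 1))) / real q"
    by (rule ineq_pos) (use q1 qn n mu in \<open>auto simp: P_def\<close>)
  also have "\<dots> = (\<Sum>u\<in>occupied n eta. hfun n \<mu> (eta v) v u) / real q"
  proof -
    have hs: "(\<Sum>u\<in>occupied n eta. hfun n \<mu> (eta v) v u) = exp (- \<mu> * (real (eta v) - 1)) +
       (real q - 1) * ((exp (- \<mu> * (real (eta v) + 1)) + (real n - 2) * P) / (real n - 1))"
      unfolding q_def P_def by (rule sum_hfun_in[OF vin]) simp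
    show ?thesis by (simp only: hs[unfolded e1 e2])
  qed
  finally have "ennreal (P * (1 + (exp \<mu> + exp (- \<mu>) - 2) / real q)) \<le> ennreal ((\<Sum>u\<in>occupied n eta. hfun n \<mu> (eta v) v u) / real q)"
    by (rule ennreal_leI)
  then show ?thesis by (subst EX_formula[OF g r n v]) (simp only: P_def q_def)
qed

lemma EX_zero:
  assumes g: "good n r eta" and r: "1 \<le> r" and n: "2 \<le> n" and v: "v < n" and X: "eta v = 0" and mu: "0 \<le> \<mu>"
  shows "ennreal (1 - (1 - exp (- \<mu>)) / real (card (occupied n eta)))
     \<le> (\<integral>\<^sup>+p. ennreal (exp (- \<mu> * real (zrp_step n eta (fst p) (snd p) v))) \<partial>(Unf \<Otimes>\<^sub>M Unf))"
proof -
  define q where "q = card (occupied n eta)"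
  have q1: "1 \<le> q" using good_occ_pos[OF g r] by (simp add: q_def)
  have qn: "q \<le> n - 1" unfolding q_def by (rule card_occ_le_v[where v=v and n=n and eta=eta, OF v X])
  then have qn': "real q \<le> real n - 1" using n by linarith
  have vin: "v \<notin> occupied n eta" using X by (simp add: occupied_def)
  have F: "exp (- \<mu>) \<le> 1" using mu by simp
  have "(1 - exp (- \<mu>)) / (real n - 1) \<le> (1 - exp (- \<mu>)) / real q"
    by (rule divide_left_mono) (use F q1 qn' in auto)
  then have "1 - (1 - exp (- \<mu>)) / real q \<le> (exp (- \<mu>) + (real n - 2)) / (real n - 1)"
    using n by (simp add: field_simps)
  also have "\<dots> = (\<Sum>u\<in>occupied n eta. hfun n \<mu> (eta v) v u) / real q"
  proof -
    have hs: "(\<Sum>u\<in>occupied n eta. hfun n \<mu> (eta v) v u) = real q * ((exp (- \<mu> * (real (eta v) + 1)) + (real n - 2) * exp (- \<mu> * real (eta v))) / (real n - 1))"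
      unfolding q_def by (rule sum_hfun_notin[OF vin])
    have qpos: "real q \<noteq> 0" using q1 by simp
    show ?thesis unfolding hs using qpos X by simp
  qed
  finally have "ennreal (1 - (1 - exp (- \<mu>)) / real q) \<le> ennreal ((\<Sum>u\<in>occupied n eta. hfun n \<mu> (eta v) v u) / real q)"
    by (rule ennreal_leI)
  then show ?thesis by (subst EX_formula[OF g r n v]) (simp only: q_def X of_nat_0 mult_zero_right minus_zero exp_zero mult_1)
qed

definition gw :: "real \<times> real \<times> real \<Rightarrow> bool" where
  "gw w \<longleftrightarrow> 0 < fst w \<and> 0 < fst (snd w) \<and> fst (snd w) < 1 \<and> 0 < snd (snd w) \<and> snd (snd w) < 1"

lemma AE_Exd: "AE x in Exd. 0 < x"
proof -
  have "AE x in lborel. x \<noteq> 0" by (rule AE_lborel_singleton)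
  then have "AE x in lborel. ennreal (exponential_density 1 x) \<noteq> 0 \<longrightarrow> 0 < x"
    by eventually_elim (auto simp: exponential_density_def)
  then show ?thesis by (subst AE_density) auto
qed

lemma AE_drive: "AE w in zrp_drive. gw w"
proof -
  interpret UU: prob_space "Unf \<Otimes>\<^sub>M Unf" by (rule prob_UU)
  interpret U: prob_space Unf by (rule prob_Un)
  interpret E: prob_space Exd by (rule prob_Ex)
  interpret P: pair_sigma_finite Exd "Unf \<Otimes>\<^sub>M Unf" ..
  interpret P2: pair_sigma_finite Unf Unf ..
  have UU: "AE p in Unf \<Otimes>\<^sub>M Unf. 0 < fst p \<and> fst p < 1 \<and> 0 < snd p \<and> snd p < 1"
  proof (rule P2.AE_pair_measure)
    show "{x \<in> space (Unf \<Otimes>\<^sub>M Unf). 0 < fst x \<and> fst x < 1 \<and> 0 < snd x \<and> snd x < 1} \<in> sets (Unf \<Otimes>\<^sub>M Unf)"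
      by measurable
    show "AE x in Unf. AE y in Unf. 0 < fst (x, y) \<and> fst (x, y) < 1 \<and> 0 < snd (x, y) \<and> snd (x, y) < 1"
      using AE_Unf by eventually_elim (use AE_Unf in auto)
  qed
  show ?thesis unfolding zrp_drive_def
  proof (rule P.AE_pair_measure)
    show "{x \<in> space (Exd \<Otimes>\<^sub>M (Unf \<Otimes>\<^sub>M Unf)). gw x} \<in> sets (Exd \<Otimes>\<^sub>M (Unf \<Otimes>\<^sub>M Unf))"
      unfolding gw_def by measurable
    show "AE x in Exd. AE y in Unf \<Otimes>\<^sub>M Unf. gw (x, y)"
      using AE_Exd by eventually_elim (use UU in \<open>auto simp: gw_def\<close>)
  qed
qed

lemma meas_FG:
  fixes F :: "real \<Rightarrow> ennreal" and G :: "real \<times> real \<Rightarrow> ennreal"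
  assumes F[measurable]: "F \<in> borel_measurable borel" and G[measurable]: "G \<in> borel_measurable (Unf \<Otimes>\<^sub>M Unf)"
  shows "(\<lambda>w. F (fst w) * G (snd w)) \<in> borel_measurable zrp_drive"
proof -
  have FE[measurable]: "F \<in> borel_measurable Exd" by simp
  have m1[measurable]: "(\<lambda>w. F (fst w)) \<in> borel_measurable (Exd \<Otimes>\<^sub>M (Unf \<Otimes>\<^sub>M Unf))"
    using measurable_compose[OF measurable_fst[of Exd "Unf \<Otimes>\<^sub>M Unf"] FE] by (simp add: comp_def)
  have m2[measurable]: "(\<lambda>w. G (snd w)) \<in> borel_measurable (Exd \<Otimes>\<^sub>M (Unf \<Otimes>\<^sub>M Unf))"
    using measurable_compose[OF measurable_snd[of Exd "Unf \<Otimes>\<^sub>M Unf"] G] by (simp add: comp_def)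
  have "(\<lambda>w. F (fst w) * G (snd w)) \<in> borel_measurable (Exd \<Otimes>\<^sub>M (Unf \<Otimes>\<^sub>M Unf))"
    by (rule borel_measurable_times_ennreal[OF m1 m2])
  then show ?thesis unfolding zrp_drive_def .
qed

locale pot =
  fixes n r v :: nat and T lam mu kap cc :: real
  assumes n2: "2 \<le> n" and r1: "1 \<le> r" and vn: "v < n" and mu0: "0 \<le> mu" and kap0: "0 \<le> kap"
    and lam0: "0 \<le> lam" and kapD: "kap \<le> exp mu + exp (- mu) - 2" and gam: "1 - exp (- mu) \<le> lam - kap"
    and cc0: "0 < cc" and T0: "0 < T"
begin

definition goodS :: "st \<Rightarrow> bool" where
  "goodS s \<longleftrightarrow> good n r (fst s) \<and> 0 \<le> fst (snd s) \<and> 0 \<le> snd (snd s)"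

definition V :: "st \<Rightarrow> ennreal" where
  "V s = (if \<not> goodS s then 0 else if cc \<le> snd (snd s) then ennreal (exp (lam * cc))
     else if T \<le> fst (snd s) then ennreal (exp (lam * cc - kap * T))
     else ennreal (exp (lam * snd (snd s) - mu * real (fst s v) - kap * fst (snd s))))"

lemma mstep_eq: "mstep n v T (eta, J, Z) w = (zrp_step n eta (fst (snd w)) (snd (snd w)),
    J + fst w / real (card (occupied n eta)),
    Z + (if eta v = 0 then max 0 (min (J + fst w / real (card (occupied n eta))) T - J) else 0))"
  by (simp add: mstep_def Let_def)

lemma step_goodS:
  assumes "goodS (eta, J, Z)" "gw w"
  shows "goodS (mstep n v T (eta, J, Z) w)"
proof -
  have g: "good n r eta" and J: "0 \<le> J" and Z: "0 \<le> Z" using assms(1) by (auto simp: goodS_def)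
  have q: "0 < card (occupied n eta)" using good_occ_pos[OF g r1] .
  have "good n r (zrp_step n eta (fst (snd w)) (snd (snd w)))"
    by (rule good_step[OF g r1 _ _ _ _ n2]) (use assms(2) in \<open>auto simp: gw_def\<close>)
  moreover have "0 \<le> fst w / real (card (occupied n eta))" using assms(2) q by (simp add: gw_def)
  ultimately show ?thesis using J Z by (auto simp: goodS_def mstep_eq)
qed

lemma prob_drive_space: "emeasure zrp_drive (space zrp_drive) = 1"
  using prob_space.emeasure_space_1[OF prob_drive] .

lemma onestep_A:
  assumes gs: "goodS (eta, J, Z)" and Zc: "cc \<le> Z"
  shows "V (eta, J, Z) \<le> (\<integral>\<^sup>+w. V (mstep n v T (eta, J, Z) w) \<partial>zrp_drive)"
proof -
  have "AE w in zrp_drive. V (mstep n v T (eta, J, Z) w) = ennreal (exp (lam * cc))"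
    using AE_drive
  proof eventually_elim
    case (elim w)
    have g': "goodS (mstep n v T (eta, J, Z) w)" by (rule step_goodS[OF gs elim])
    have "cc \<le> snd (snd (mstep n v T (eta, J, Z) w))" using Zc by (auto simp: mstep_eq)
    then show ?case using g' by (simp add: V_def)
  qed
  then have "(\<integral>\<^sup>+w. V (mstep n v T (eta, J, Z) w) \<partial>zrp_drive) = (\<integral>\<^sup>+w. ennreal (exp (lam * cc)) \<partial>zrp_drive)"
    by (rule nn_integral_cong_AE)
  also have "\<dots> = ennreal (exp (lam * cc))" by (simp add: prob_drive_space)
  finally show ?thesis using gs Zc by (simp add: V_def)
qed

lemma onestep_B:
  assumes gs: "goodS (eta, J, Z)" and Zc: "\<not> cc \<le> Z" and JT: "T \<le> J"
  shows "V (eta, J, Z) \<le> (\<integral>\<^sup>+w. V (mstep n v T (eta, J, Z) w) \<partial>zrp_drive)"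
proof -
  have "AE w in zrp_drive. V (mstep n v T (eta, J, Z) w) = ennreal (exp (lam * cc - kap * T))"
    using AE_drive
  proof eventually_elim
    case (elim w)
    have g': "goodS (mstep n v T (eta, J, Z) w)" by (rule step_goodS[OF gs elim])
    have g: "good n r eta" using gs by (simp add: goodS_def)
    have q: "0 < card (occupied n eta)" using good_occ_pos[OF g r1] .
    have h: "0 \<le> fst w / real (card (occupied n eta))" using elim q by (simp add: gw_def)
    have "snd (snd (mstep n v T (eta, J, Z) w)) = Z" using JT by (auto simp: mstep_eq)
    moreover have "T \<le> fst (snd (mstep n v T (eta, J, Z) w))" using JT h by (auto simp: mstep_eq)
    ultimately show ?case using g' Zc by (simp add: V_def)
  qed
  then have "(\<integral>\<^sup>+w. V (mstep n v T (eta, J, Z) w) \<partial>zrp_drive) = (\<integral>\<^sup>+w. ennreal (exp (lam * cc - kap * T)) \<partial>zrp_drive)"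
    by (rule nn_integral_cong_AE)
  also have "\<dots> = ennreal (exp (lam * cc - kap * T))" by (simp add: prob_drive_space)
  finally show ?thesis using gs Zc JT by (simp add: V_def)
qed

lemma onestep_C1:
  assumes gs: "goodS (eta, J, Z)" and Zc: "Z < cc" and JT: "J < T" and X: "0 < eta v"
  shows "V (eta, J, Z) \<le> (\<integral>\<^sup>+w. V (mstep n v T (eta, J, Z) w) \<partial>zrp_drive)"
proof -
  have g: "good n r eta" and J0: "0 \<le> J" and Z0: "0 \<le> Z" using gs by (auto simp: goodS_def)
  define q where "q = real (card (occupied n eta))"
  have q: "0 < q" using good_occ_pos[OF g r1] by (simp add: q_def)
  define K where "K = exp (lam * Z - kap * J)"
  define F where "F x = ennreal (exp (- (kap / q) * x))" for x
  define G where "G p = ennreal (exp (- mu * real (zrp_step n eta (fst p) (snd p) v)))" for p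
  have Fm[measurable]: "F \<in> borel_measurable borel" unfolding F_def by measurable
  have Gm[measurable]: "G \<in> borel_measurable (Unf \<Otimes>\<^sub>M Unf)" unfolding G_def by (rule meas_Phi)
  have pw: "AE w in zrp_drive. ennreal K * (F (fst w) * G (snd w)) \<le> V (mstep n v T (eta, J, Z) w)"
    using AE_drive
  proof eventually_elim
    case (elim w)
    have g': "goodS (mstep n v T (eta, J, Z) w)" by (rule step_goodS[OF gs elim])
    define h where "h = fst w / q"
    define X' where "X' = real (zrp_step n eta (fst (snd w)) (snd (snd w)) v)"
    have h0: "0 \<le> h" using elim q by (simp add: gw_def h_def)
    have X'0: "0 \<le> X'" by (simp add: X'_def)
    have Z': "snd (snd (mstep n v T (eta, J, Z) w)) = Z" using X by (simp add: mstep_eq)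
    have J': "fst (snd (mstep n v T (eta, J, Z) w)) = J + h" by (simp add: mstep_eq h_def q_def)
    have E': "real (fst (mstep n v T (eta, J, Z) w) v) = X'" by (simp add: mstep_eq X'_def)
    have lhs: "ennreal K * (F (fst w) * G (snd w)) = ennreal (exp (lam * Z - mu * X' - kap * (J + h)))"
    proof -
      have "ennreal K * (F (fst w) * G (snd w)) = ennreal (K * (exp (- (kap / q) * fst w) * exp (- mu * X')))"
        by (simp add: F_def G_def K_def X'_def ennreal_mult)
      also have "K * (exp (- (kap / q) * fst w) * exp (- mu * X')) = exp (lam * Z - mu * X' - kap * (J + h))"
        unfolding K_def h_def by (simp add: exp_add[symmetric] algebra_simps)
      finally show ?thesis .
    qed
    show ?case
    proof (cases "T \<le> J + h")
      case True
      have "exp (lam * Z - mu * X' - kap * (J + h)) \<le> exp (lam * cc - kap * T)"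
      proof -
        have "lam * Z \<le> lam * cc" using lam0 Zc by (intro mult_left_mono) auto
        moreover have "kap * T \<le> kap * (J + h)" using kap0 True by (intro mult_left_mono) auto
        moreover have "0 \<le> mu * X'" using mu0 X'0 by simp
        ultimately show ?thesis by simp
      qed
      then show ?thesis using g' Zc True unfolding lhs by (simp add: V_def Z' J' ennreal_leI)
    next
      case False
      then show ?thesis using g' Zc unfolding lhs by (simp add: V_def Z' J' E')
    qed
  qed
  have "(\<integral>\<^sup>+w. ennreal K * (F (fst w) * G (snd w)) \<partial>zrp_drive) \<le> (\<integral>\<^sup>+w. V (mstep n v T (eta, J, Z) w) \<partial>zrp_drive)"
    by (rule nn_integral_mono_AE[OF pw])
  moreover have "(\<integral>\<^sup>+w. ennreal K * (F (fst w) * G (snd w)) \<partial>zrp_drive) = ennreal K * ((\<integral>\<^sup>+x. F x \<partial>Exd) * (\<integral>\<^sup>+y. G y \<partial>(Unf \<Otimes>\<^sub>M Unf)))"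
    by (subst nn_integral_cmult) (rule meas_FG[OF Fm Gm], simp add: prod_int[OF Fm Gm])
  moreover have "(\<integral>\<^sup>+x. F x \<partial>Exd) = ennreal (1 / (1 + kap / q))"
    unfolding F_def by (rule exp_laplace) (use kap0 q in simp)
  moreover have "ennreal (exp (- mu * real (eta v)) * (1 + (exp mu + exp (- mu) - 2) / q)) \<le> (\<integral>\<^sup>+y. G y \<partial>(Unf \<Otimes>\<^sub>M Unf))"
    unfolding G_def q_def by (rule EX_pos[OF g r1 n2 vn X mu0])
  ultimately have "ennreal K * (ennreal (1 / (1 + kap / q)) * ennreal (exp (- mu * real (eta v)) * (1 + (exp mu + exp (- mu) - 2) / q)))
     \<le> (\<integral>\<^sup>+w. V (mstep n v T (eta, J, Z) w) \<partial>zrp_drive)"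
  proof -
    assume a1: "(\<integral>\<^sup>+w. ennreal K * (F (fst w) * G (snd w)) \<partial>zrp_drive) \<le> (\<integral>\<^sup>+w. V (mstep n v T (eta, J, Z) w) \<partial>zrp_drive)"
      and a2: "(\<integral>\<^sup>+w. ennreal K * (F (fst w) * G (snd w)) \<partial>zrp_drive) = ennreal K * ((\<integral>\<^sup>+x. F x \<partial>Exd) * (\<integral>\<^sup>+y. G y \<partial>(Unf \<Otimes>\<^sub>M Unf)))"
      and a3: "(\<integral>\<^sup>+x. F x \<partial>Exd) = ennreal (1 / (1 + kap / q))"
      and a4: "ennreal (exp (- mu * real (eta v)) * (1 + (exp mu + exp (- mu) - 2) / q)) \<le> (\<integral>\<^sup>+y. G y \<partial>(Unf \<Otimes>\<^sub>M Unf))"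
    have "ennreal K * (ennreal (1 / (1 + kap / q)) * ennreal (exp (- mu * real (eta v)) * (1 + (exp mu + exp (- mu) - 2) / q)))
        \<le> ennreal K * (ennreal (1 / (1 + kap / q)) * (\<integral>\<^sup>+y. G y \<partial>(Unf \<Otimes>\<^sub>M Unf)))"
      by (intro mult_left_mono a4) auto
    also have "\<dots> = (\<integral>\<^sup>+w. ennreal K * (F (fst w) * G (snd w)) \<partial>zrp_drive)"
      by (simp only: a2 a3)
    also have "\<dots> \<le> (\<integral>\<^sup>+w. V (mstep n v T (eta, J, Z) w) \<partial>zrp_drive)" by (rule a1)
    finally show ?thesis .
  qed
  moreover have "V (eta, J, Z) \<le> ennreal K * (ennreal (1 / (1 + kap / q)) * ennreal (exp (- mu * real (eta v)) * (1 + (exp mu + exp (- mu) - 2) / q)))"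
  proof -
    have D: "0 \<le> exp mu + exp (- mu) - 2" using kapD kap0 by linarith
    have r: "1 \<le> (1 + (exp mu + exp (- mu) - 2) / q) / (1 + kap / q)"
    proof -
      have p: "0 < 1 + kap / q" using q kap0 by (simp add: add_pos_nonneg)
      have "kap / q \<le> (exp mu + exp (- mu) - 2) / q" using kapD q by (simp add: divide_right_mono)
      then have "1 + kap / q \<le> 1 + (exp mu + exp (- mu) - 2) / q" by simp
      then show ?thesis using p by (simp add: le_divide_eq)
    qed
    have "exp (lam * Z - mu * real (eta v) - kap * J) = K * exp (- mu * real (eta v)) * 1"
      unfolding K_def by (simp add: exp_add[symmetric] algebra_simps)
    also have "\<dots> \<le> K * exp (- mu * real (eta v)) * ((1 + (exp mu + exp (- mu) - 2) / q) / (1 + kap / q))"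
      by (intro mult_left_mono r) (simp add: K_def)
    also have "\<dots> = K * ((1 / (1 + kap / q)) * (exp (- mu * real (eta v)) * (1 + (exp mu + exp (- mu) - 2) / q)))"
      by (simp add: divide_inverse mult_ac)
    finally have *: "exp (lam * Z - mu * real (eta v) - kap * J) \<le> K * ((1 / (1 + kap / q)) * (exp (- mu * real (eta v)) * (1 + (exp mu + exp (- mu) - 2) / q)))" .
    have "V (eta, J, Z) = ennreal (exp (lam * Z - mu * real (eta v) - kap * J))"
      using gs Zc JT by (simp add: V_def)
    also have "\<dots> \<le> ennreal (K * ((1 / (1 + kap / q)) * (exp (- mu * real (eta v)) * (1 + (exp mu + exp (- mu) - 2) / q))))"
      by (rule ennreal_leI[OF *])
    also have "\<dots> = ennreal K * (ennreal (1 / (1 + kap / q)) * ennreal (exp (- mu * real (eta v)) * (1 + (exp mu + exp (- mu) - 2) / q)))"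
    proof -
      have p: "0 \<le> 1 / (1 + kap / q)" using q kap0 by (simp add: add_nonneg_nonneg)
      have p2: "0 \<le> exp (- mu * real (eta v)) * (1 + (exp mu + exp (- mu) - 2) / q)"
        using q D by (simp add: add_nonneg_nonneg)
      have K0: "0 \<le> K" by (simp add: K_def)
      show ?thesis by (simp only: ennreal_mult[OF K0 mult_nonneg_nonneg[OF p p2]] ennreal_mult[OF p p2])
    qed
    finally show ?thesis .
  qed
  ultimately show ?thesis by (meson order_trans)
qed

lemma onestep_C2:
  assumes gs: "goodS (eta, J, Z)" and Zc: "Z < cc" and JT: "J < T" and X: "eta v = 0"
  shows "V (eta, J, Z) \<le> (\<integral>\<^sup>+w. V (mstep n v T (eta, J, Z) w) \<partial>zrp_drive)"
proof -
  have g: "good n r eta" and J0: "0 \<le> J" and Z0: "0 \<le> Z" using gs by (auto simp: goodS_def)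
  define q where "q = real (card (occupied n eta))"
  have q1: "1 \<le> q" using good_occ_pos[OF g r1] by (simp add: q_def)
  have q: "0 < q" using q1 by simp
  define K where "K = exp (lam * Z - kap * J)"
  define \<gamma> where "\<gamma> = lam - kap"
  define m where "m = min (cc - Z) (T - J)"
  have m0: "0 < m" using Zc JT by (simp add: m_def)
  define f1 where "f1 x = ennreal (exp (\<gamma> * m)) * indicator {q * m..} x" for x :: real
  define f2 where "f2 x = ennreal (exp ((\<gamma> / q) * x)) * indicator {..<q * m} x" for x :: real
  define G where "G p = ennreal (exp (- mu * real (zrp_step n eta (fst p) (snd p) v)))" for p
  have f1m[measurable]: "f1 \<in> borel_measurable borel" unfolding f1_def by measurable
  have f2m[measurable]: "f2 \<in> borel_measurable borel" unfolding f2_def by measurable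
  have Gm[measurable]: "G \<in> borel_measurable (Unf \<Otimes>\<^sub>M Unf)" unfolding G_def by (rule meas_Phi)
  have onem: "(\<lambda>_. 1::ennreal) \<in> borel_measurable (Unf \<Otimes>\<^sub>M Unf)" by simp
  have pw: "AE w in zrp_drive. ennreal K * (f1 (fst w) + f2 (fst w) * G (snd w)) \<le> V (mstep n v T (eta, J, Z) w)"
    using AE_drive
  proof eventually_elim
    case (elim w)
    have g': "goodS (mstep n v T (eta, J, Z) w)" by (rule step_goodS[OF gs elim])
    define h where "h = fst w / q"
    have h0: "0 < h" using elim q by (simp add: gw_def h_def)
    have fw: "fst w = q * h" using q by (simp add: h_def)
    define X' where "X' = real (zrp_step n eta (fst (snd w)) (snd (snd w)) v)"
    have X'0: "0 \<le> X'" by (simp add: X'_def)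
    have Z': "snd (snd (mstep n v T (eta, J, Z) w)) = Z + min h (T - J)"
      using X JT h0 by (simp add: mstep_eq h_def q_def)
    have J': "fst (snd (mstep n v T (eta, J, Z) w)) = J + h" by (simp add: mstep_eq h_def q_def)
    have E': "real (fst (mstep n v T (eta, J, Z) w) v) = X'" by (simp add: mstep_eq X'_def)
    show ?case
    proof (cases "m \<le> h")
      case True
      have f1v: "f1 (fst w) = ennreal (exp (\<gamma> * m))" using True q by (simp add: f1_def fw)
      have f2v: "f2 (fst w) = 0" using True q by (simp add: f2_def fw)
      have lhs: "ennreal K * (f1 (fst w) + f2 (fst w) * G (snd w)) = ennreal (K * exp (\<gamma> * m))"
        by (simp add: f1v f2v K_def ennreal_mult)
      have Kexp: "K * exp (\<gamma> * m) = exp (lam * (Z + m) - kap * (J + m))"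
        unfolding K_def \<gamma>_def by (simp add: exp_add[symmetric] algebra_simps)
      show ?thesis
      proof (cases "cc \<le> Z + min h (T - J)")
        case True
        have "lam * (Z + m) \<le> lam * cc" using lam0 by (intro mult_left_mono) (auto simp: m_def)
        moreover have "0 \<le> kap * (J + m)" using kap0 J0 m0 by simp
        ultimately have "K * exp (\<gamma> * m) \<le> exp (lam * cc)" unfolding Kexp by simp
        then show ?thesis unfolding lhs using g' True by (simp add: V_def Z' ennreal_leI)
      next
        case False
        have TJ: "T \<le> J + h"
        proof (rule ccontr)
          assume a: "\<not> T \<le> J + h"
          have h1: "h < T - J" using a by simp
          have h2: "h < cc - Z" using False h1 by simp
          have "h < m" using h1 h2 by (simp add: m_def)
          then show False using \<open>m \<le> h\<close> by simp
        qed
        then have mm: "min h (T - J) = T - J" by simp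
        then have lt: "Z + (T - J) < cc" using False by simp
        then have mT: "m = T - J" by (simp add: m_def)
        have "lam * (Z + m) \<le> lam * cc" using lam0 lt mT by (intro mult_left_mono) auto
        then have "K * exp (\<gamma> * m) \<le> exp (lam * cc - kap * T)" unfolding Kexp unfolding mT by simp
        then show ?thesis unfolding lhs using g' False TJ by (simp add: V_def Z' J' ennreal_leI)
      qed
    next
      case False
      have f1v: "f1 (fst w) = 0" using False q by (simp add: f1_def fw)
      have f2v: "f2 (fst w) = ennreal (exp (\<gamma> * h))" using False q by (simp add: f2_def fw)
      have lhs: "ennreal K * (f1 (fst w) + f2 (fst w) * G (snd w)) = ennreal (exp (lam * (Z + h) - mu * X' - kap * (J + h)))"
      proof -
        have "ennreal K * (f1 (fst w) + f2 (fst w) * G (snd w)) = ennreal (K * (exp (\<gamma> * h) * exp (- mu * X')))"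
          by (simp add: f1v f2v G_def K_def X'_def ennreal_mult)
        also have "K * (exp (\<gamma> * h) * exp (- mu * X')) = exp (lam * (Z + h) - mu * X' - kap * (J + h))"
          unfolding K_def \<gamma>_def by (simp add: exp_add[symmetric] algebra_simps)
        finally show ?thesis .
      qed
      have hm1: "h < cc - Z" "h < T - J" using False by (auto simp: m_def)
      have a: "Z + min h (T - J) = Z + h" and b: "\<not> cc \<le> Z + h" and c: "\<not> T \<le> J + h"
        using hm1 by auto
      show ?thesis unfolding lhs using g' a b c by (simp add: V_def Z' J' E')
    qed
  qed
  obtain I where I0: "0 \<le> I" and If2: "(\<integral>\<^sup>+x. f2 x \<partial>Exd) = ennreal I"
    and Ieq: "exp ((\<gamma> / q - 1) * (q * m)) = 1 + (\<gamma> / q - 1) * I"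
    using exp_head[of "q * m" "\<gamma> / q"] q m0 unfolding f2_def by auto
  have If1: "(\<integral>\<^sup>+x. f1 x \<partial>Exd) = ennreal (exp (\<gamma> * m)) * ennreal (exp (- (q * m)))"
    unfolding f1_def using q m0 by (subst nn_integral_cmult_indicator) (auto simp: exp_tail)
  have IG: "ennreal (1 - (1 - exp (- mu)) / q) \<le> (\<integral>\<^sup>+y. G y \<partial>(Unf \<Otimes>\<^sub>M Unf))"
    unfolding G_def q_def by (rule EX_zero[OF g r1 n2 vn X mu0])
  have one: "(\<integral>\<^sup>+y. (1::ennreal) \<partial>(Unf \<Otimes>\<^sub>M Unf)) = 1"
    using prob_space.emeasure_space_1[OF prob_UU] by simp
  have int_eq: "(\<integral>\<^sup>+w. ennreal K * (f1 (fst w) + f2 (fst w) * G (snd w)) \<partial>zrp_drive)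
      = ennreal K * ((\<integral>\<^sup>+x. f1 x \<partial>Exd) + (\<integral>\<^sup>+x. f2 x \<partial>Exd) * (\<integral>\<^sup>+y. G y \<partial>(Unf \<Otimes>\<^sub>M Unf)))"
  proof -
    have m1: "(\<lambda>w. f1 (fst w) * 1) \<in> borel_measurable zrp_drive" by (rule meas_FG[OF f1m onem])
    have m2: "(\<lambda>w. f2 (fst w) * G (snd w)) \<in> borel_measurable zrp_drive" by (rule meas_FG[OF f2m Gm])
    have "(\<integral>\<^sup>+w. ennreal K * (f1 (fst w) + f2 (fst w) * G (snd w)) \<partial>zrp_drive)
        = ennreal K * (\<integral>\<^sup>+w. f1 (fst w) * 1 + f2 (fst w) * G (snd w) \<partial>zrp_drive)"
      using m1 m2 by (subst nn_integral_cmult[symmetric]) auto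
    also have "\<dots> = ennreal K * ((\<integral>\<^sup>+w. f1 (fst w) * 1 \<partial>zrp_drive) + (\<integral>\<^sup>+w. f2 (fst w) * G (snd w) \<partial>zrp_drive))"
      using m1 m2 by (subst nn_integral_add) auto
    also have "(\<integral>\<^sup>+w. f1 (fst w) * 1 \<partial>zrp_drive) = (\<integral>\<^sup>+x. f1 x \<partial>Exd) * 1"
      using prod_int[OF f1m onem] one by simp
    also have "(\<integral>\<^sup>+w. f2 (fst w) * G (snd w) \<partial>zrp_drive) = (\<integral>\<^sup>+x. f2 x \<partial>Exd) * (\<integral>\<^sup>+y. G y \<partial>(Unf \<Otimes>\<^sub>M Unf))"
      by (rule prod_int[OF f2m Gm])
    finally show ?thesis by simp
  qed
  define A where "A = exp (\<gamma> * m) * exp (- (q * m))"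
  define B where "B = 1 - (1 - exp (- mu)) / q"
  have B0: "0 \<le> B"
  proof -
    have d0: "0 \<le> 1 - exp (- mu)" using mu0 by simp
    have "(1 - exp (- mu)) * 1 \<le> (1 - exp (- mu)) * q" by (rule mult_left_mono[OF q1 d0])
    then have "(1 - exp (- mu)) / q \<le> 1 - exp (- mu)" using q by (simp add: divide_le_eq)
    also have "\<dots> \<le> 1" by simp
    finally show ?thesis by (simp add: B_def)
  qed
  have A0: "0 \<le> A" by (simp add: A_def)
  have key: "1 \<le> A + I * B"
  proof -
    have "A = exp ((\<gamma> / q - 1) * (q * m))"
      unfolding A_def using q by (simp add: exp_add[symmetric] field_simps)
    then have "A + I * B = 1 + I * ((\<gamma> - (1 - exp (- mu))) / q)"
      using Ieq q by (simp add: B_def field_simps)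
    moreover have "0 \<le> I * ((\<gamma> - (1 - exp (- mu))) / q)"
      using I0 q gam by (simp add: \<gamma>_def)
    ultimately show ?thesis by simp
  qed
  have "V (eta, J, Z) = ennreal K"
    using gs Zc JT X by (simp add: V_def K_def)
  also have "\<dots> \<le> ennreal (K * (A + I * B))"
    using key by (intro ennreal_leI) (simp add: K_def)
  also have "\<dots> = ennreal K * (ennreal A + ennreal I * ennreal B)"
    using A0 I0 B0 by (simp add: ennreal_mult K_def)
  also have "\<dots> \<le> ennreal K * (ennreal A + ennreal I * (\<integral>\<^sup>+y. G y \<partial>(Unf \<Otimes>\<^sub>M Unf)))"
    using IG by (intro mult_left_mono add_left_mono) (auto simp: B_def)
  also have "\<dots> = ennreal K * ((\<integral>\<^sup>+x. f1 x \<partial>Exd) + (\<integral>\<^sup>+x. f2 x \<partial>Exd) * (\<integral>\<^sup>+y. G y \<partial>(Unf \<Otimes>\<^sub>M Unf)))"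
    by (simp add: If1 If2 A_def ennreal_mult)
  also have "\<dots> = (\<integral>\<^sup>+w. ennreal K * (f1 (fst w) + f2 (fst w) * G (snd w)) \<partial>zrp_drive)"
    by (rule int_eq[symmetric])
  also have "\<dots> \<le> (\<integral>\<^sup>+w. V (mstep n v T (eta, J, Z) w) \<partial>zrp_drive)"
    by (rule nn_integral_mono_AE[OF pw])
  finally show ?thesis .
qed

end

context pot
begin

lemma onestep:
  assumes gs: "goodS s"
  shows "V s \<le> (\<integral>\<^sup>+w. V (mstep n v T s w) \<partial>zrp_drive)"
proof -
  obtain eta J Z where s: "s = (eta, J, Z)" by (cases s) auto
  show ?thesis unfolding s
  proof (cases "cc \<le> Z")
    case True
    then show "V (eta, J, Z) \<le> (\<integral>\<^sup>+w. V (mstep n v T (eta, J, Z) w) \<partial>zrp_drive)"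
      using onestep_A gs s by blast
  next
    case False
    show "V (eta, J, Z) \<le> (\<integral>\<^sup>+w. V (mstep n v T (eta, J, Z) w) \<partial>zrp_drive)"
    proof (cases "T \<le> J")
      case True
      then show ?thesis using onestep_B gs s False by blast
    next
      case JT: False
      show ?thesis
      proof (cases "eta v = 0")
        case True
        then show ?thesis using onestep_C2 gs s False JT by simp
      next
        case X: False
        then show ?thesis using onestep_C1 gs s False JT by simp
      qed
    qed
  qed
qed

definition U :: "st \<Rightarrow> ennreal" where
  "U s = (if goodS s then ennreal (exp (- fst (snd s))) else 0)"

lemma meas_Vx: "(\<lambda>x::real\<times>real. V (e, x)) \<in> borel_measurable (borel \<Otimes>\<^sub>M borel)"
  unfolding V_def goodS_def fst_conv snd_conv by measurable

lemma meas_Ux: "(\<lambda>x::real\<times>real. U (e, x)) \<in> borel_measurable (borel \<Otimes>\<^sub>M borel)"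
  unfolding U_def goodS_def fst_conv snd_conv by measurable

lemma meas_V: "(\<lambda>\<omega>. V (mchain n v T s \<omega> k)) \<in> borel_measurable zrp_space"
  by (rule meas_G) (rule meas_Vx[unfolded borel_prod])

lemma meas_U: "(\<lambda>\<omega>. U (mchain n v T s \<omega> k)) \<in> borel_measurable zrp_space"
  by (rule meas_G) (rule meas_Ux[unfolded borel_prod])

lemma V_iter: "V s \<le> (\<integral>\<^sup>+\<omega>. V (mchain n v T s \<omega> k) \<partial>zrp_space)"
proof (induction k arbitrary: s)
  case 0
  then show ?case using prob_space.emeasure_space_1[OF prob_space_zrp] by simp
next
  case (Suc k)
  show ?case
  proof (cases "goodS s")
    case False
    then show ?thesis by (simp add: V_def)
  next
    case True
    have "V s \<le> (\<integral>\<^sup>+w. V (mstep n v T s w) \<partial>zrp_drive)" by (rule onestep[OF True])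
    also have "\<dots> \<le> (\<integral>\<^sup>+w. \<integral>\<^sup>+\<omega>. V (mchain n v T (mstep n v T s w) \<omega> k) \<partial>zrp_space \<partial>zrp_drive)"
      by (intro nn_integral_mono Suc.IH)
    also have "\<dots> = (\<integral>\<^sup>+w. \<integral>\<^sup>+\<omega>. V (mchain n v T s (case_nat w \<omega>) (Suc k)) \<partial>zrp_space \<partial>zrp_drive)"
      by simp
    also have "\<dots> = (\<integral>\<^sup>+\<omega>. V (mchain n v T s \<omega> (Suc k)) \<partial>zrp_space)"
      by (rule split_space[symmetric, OF meas_V])
    finally show ?thesis .
  qed
qed

lemma U_onestep:
  assumes gs: "goodS s"
  shows "\<exists>g. g \<in> borel_measurable zrp_drive \<and> (\<forall>w. U (mstep n v T s w) \<le> g w) \<and>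
     (\<integral>\<^sup>+w. g w \<partial>zrp_drive) \<le> ennreal (real n / (real n + 1)) * U s"
proof -
  obtain eta J Z where s: "s = (eta, J, Z)" by (cases s) auto
  have g: "good n r eta" using gs s by (simp add: goodS_def)
  define q where "q = real (card (occupied n eta))"
  have q: "0 < q" using good_occ_pos[OF g r1] by (simp add: q_def)
  have qn: "q \<le> real n" using card_occ_le[of n eta] by (simp add: q_def)
  define F where "F x = ennreal (exp (- (1 / q) * x))" for x
  have Fm[measurable]: "F \<in> borel_measurable borel" unfolding F_def by measurable
  have onem: "(\<lambda>_. 1::ennreal) \<in> borel_measurable (Unf \<Otimes>\<^sub>M Unf)" by simp
  have pw: "U (mstep n v T s w) \<le> ennreal (exp (- J)) * (F (fst w) * 1)" for w
  proof -
    have "exp (- (J + fst w / q)) = exp (- J) * exp (- (1 / q) * fst w)"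
      by (simp add: exp_add[symmetric])
    then show ?thesis
      by (auto simp: U_def s mstep_eq F_def q_def[symmetric] ennreal_mult)
  qed
  have gm: "(\<lambda>w. ennreal (exp (- J)) * (F (fst w) * 1)) \<in> borel_measurable zrp_drive"
    using meas_FG[OF Fm onem] by simp
  have "(\<integral>\<^sup>+w. ennreal (exp (- J)) * (F (fst w) * 1) \<partial>zrp_drive) = ennreal (exp (- J)) * ((\<integral>\<^sup>+x. F x \<partial>Exd) * (\<integral>\<^sup>+y. 1 \<partial>(Unf \<Otimes>\<^sub>M Unf)))"
    by (subst nn_integral_cmult) (rule meas_FG[OF Fm onem], use prod_int[OF Fm onem] in simp)
  also have "(\<integral>\<^sup>+y. 1 \<partial>(Unf \<Otimes>\<^sub>M Unf)) = 1"
    using prob_space.emeasure_space_1[OF prob_UU] by simp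
  also have "(\<integral>\<^sup>+x. F x \<partial>Exd) = ennreal (1 / (1 + 1 / q))"
    unfolding F_def by (rule exp_laplace) (use q in simp)
  also have "ennreal (exp (- J)) * (ennreal (1 / (1 + 1 / q)) * 1) \<le> ennreal (exp (- J)) * ennreal (real n / (real n + 1))"
  proof -
    have "1 / (1 + 1 / q) = q / (q + 1)" using q by (simp add: field_simps)
    also have "\<dots> \<le> real n / (real n + 1)" using q qn by (simp add: field_simps)
    finally show ?thesis by (intro mult_left_mono ennreal_leI) auto
  qed
  also have "\<dots> = ennreal (real n / (real n + 1)) * U s"
    using gs by (simp add: U_def s mult.commute)
  finally show ?thesis using gm pw by blast
qed

lemma U_iter: "goodS s \<Longrightarrow> (\<integral>\<^sup>+\<omega>. U (mchain n v T s \<omega> k) \<partial>zrp_space) \<le> ennreal ((real n / (real n + 1)) ^ k) * U s"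
proof (induction k arbitrary: s)
  case 0
  then show ?case using prob_space.emeasure_space_1[OF prob_space_zrp] by simp
next
  case (Suc k)
  let ?\<rho> = "real n / (real n + 1)"
  obtain gg where gm: "gg \<in> borel_measurable zrp_drive" and gle: "\<And>w. U (mstep n v T s w) \<le> gg w"
    and gint: "(\<integral>\<^sup>+w. gg w \<partial>zrp_drive) \<le> ennreal ?\<rho> * U s"
    using U_onestep[OF Suc.prems] by blast
  have "(\<integral>\<^sup>+\<omega>. U (mchain n v T s \<omega> (Suc k)) \<partial>zrp_space) = (\<integral>\<^sup>+w. \<integral>\<^sup>+\<omega>. U (mchain n v T s (case_nat w \<omega>) (Suc k)) \<partial>zrp_space \<partial>zrp_drive)"
    by (rule split_space[OF meas_U])
  also have "\<dots> = (\<integral>\<^sup>+w. \<integral>\<^sup>+\<omega>. U (mchain n v T (mstep n v T s w) \<omega> k) \<partial>zrp_space \<partial>zrp_drive)"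
    by simp
  also have "\<dots> \<le> (\<integral>\<^sup>+w. ennreal (?\<rho> ^ k) * gg w \<partial>zrp_drive)"
  proof (rule nn_integral_mono_AE)
    show "AE w in zrp_drive. (\<integral>\<^sup>+\<omega>. U (mchain n v T (mstep n v T s w) \<omega> k) \<partial>zrp_space) \<le> ennreal (?\<rho> ^ k) * gg w"
      using AE_drive
    proof eventually_elim
      case (elim w)
      obtain eta J Z where s: "s = (eta, J, Z)" by (cases s) auto
      have "goodS (mstep n v T s w)" using step_goodS[of eta J Z w] Suc.prems elim s by simp
      then have "(\<integral>\<^sup>+\<omega>. U (mchain n v T (mstep n v T s w) \<omega> k) \<partial>zrp_space) \<le> ennreal (?\<rho> ^ k) * U (mstep n v T s w)"
        by (rule Suc.IH)
      also have "\<dots> \<le> ennreal (?\<rho> ^ k) * gg w" by (intro mult_left_mono gle) auto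
      finally show ?case .
    qed
  qed
  also have "\<dots> = ennreal (?\<rho> ^ k) * (\<integral>\<^sup>+w. gg w \<partial>zrp_drive)"
    by (rule nn_integral_cmult[OF gm])
  also have "\<dots> \<le> ennreal (?\<rho> ^ k) * (ennreal ?\<rho> * U s)"
    by (intro mult_left_mono gint) auto
  also have "\<dots> = ennreal (?\<rho> ^ Suc k) * U s"
  proof -
    have "ennreal (?\<rho> ^ Suc k) = ennreal (?\<rho> ^ k) * ennreal ?\<rho>"
      by (subst power_Suc2, rule ennreal_mult) auto
    then show ?thesis by (simp only: mult.assoc)
  qed
  finally show ?case .
qed

lemma V_bound:
  "V s \<le> ennreal (exp (lam * cc)) * indicator {s. cc \<le> snd (snd s)} s + ennreal (exp (lam * cc + T)) * U s
     + ennreal (exp (lam * cc - kap * T))"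
proof -
  obtain eta J Z where s: "s = (eta, J, Z)" by (cases s) auto
  show ?thesis
  proof (cases "goodS s \<and> \<not> cc \<le> Z \<and> \<not> T \<le> J")
    case True
    have "exp (lam * Z - mu * real (eta v) - kap * J) \<le> exp (lam * cc + T) * exp (- J)"
    proof -
      have J0: "0 \<le> J" using True s by (simp add: goodS_def)
      have "lam * Z \<le> lam * cc" using True lam0 by (intro mult_left_mono) auto
      moreover have "0 \<le> mu * real (eta v)" using mu0 by simp
      moreover have "0 \<le> kap * J" using kap0 J0 by simp
      ultimately have "lam * Z - mu * real (eta v) - kap * J \<le> lam * cc + T + - J" using True by linarith
      then show ?thesis by (simp add: exp_add[symmetric])
    qed
    then have "V s \<le> ennreal (exp (lam * cc + T)) * U s"
      using True s by (simp add: V_def U_def ennreal_mult[symmetric] ennreal_leI)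
    then show ?thesis by (simp add: add_increasing2 order_trans[OF _ add_increasing])
  next
    case False
    then consider "\<not> goodS s" | "goodS s" "cc \<le> Z" | "goodS s" "\<not> cc \<le> Z" "T \<le> J" by blast
    then show ?thesis
    proof cases
      case 1
      then show ?thesis by (simp add: V_def)
    next
      case 2
      then show ?thesis using s by (simp add: V_def)
    next
      case 3
      then show ?thesis using s by (simp add: V_def)
    qed
  qed
qed

lemma main_bound:
  assumes g0: "good n r eta0"
  shows "ennreal (exp (- mu * real (eta0 v))) \<le>
     ennreal (exp (lam * cc)) * emeasure zrp_space {\<omega> \<in> space zrp_space. cc \<le> snd (snd (mchain n v T (eta0, 0, 0) \<omega> k))}
     + ennreal (exp (lam * cc + T)) * ennreal ((real n / (real n + 1)) ^ k) + ennreal (exp (lam * cc - kap * T))"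
proof -
  let ?s0 = "(eta0, 0::real, 0::real)"
  let ?Zk = "\<lambda>\<omega>. snd (snd (mchain n v T ?s0 \<omega> k))"
  let ?A = "{\<omega> \<in> space zrp_space. cc \<le> ?Zk \<omega>}"
  have gs0: "goodS ?s0" using g0 by (simp add: goodS_def)
  have Zm[measurable]: "?Zk \<in> borel_measurable zrp_space" using meas_chain by blast
  have Am: "?A \<in> sets zrp_space" by measurable
  have Um: "(\<lambda>\<omega>. U (mchain n v T ?s0 \<omega> k)) \<in> borel_measurable zrp_space" by (rule meas_U)
  have "ennreal (exp (- mu * real (eta0 v))) = V ?s0"
    using gs0 cc0 T0 by (simp add: V_def)
  also have "\<dots> \<le> (\<integral>\<^sup>+\<omega>. V (mchain n v T ?s0 \<omega> k) \<partial>zrp_space)" by (rule V_iter)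
  also have "\<dots> \<le> (\<integral>\<^sup>+\<omega>. ennreal (exp (lam * cc)) * indicator ?A \<omega> + ennreal (exp (lam * cc + T)) * U (mchain n v T ?s0 \<omega> k)
     + ennreal (exp (lam * cc - kap * T)) \<partial>zrp_space)"
  proof (rule nn_integral_mono)
    fix \<omega> assume "\<omega> \<in> space zrp_space"
    then have "indicator {s. cc \<le> snd (snd s)} (mchain n v T ?s0 \<omega> k) = (indicator ?A \<omega> :: ennreal)"
      by (simp add: indicator_def)
    then show "V (mchain n v T ?s0 \<omega> k) \<le> ennreal (exp (lam * cc)) * indicator ?A \<omega> + ennreal (exp (lam * cc + T)) * U (mchain n v T ?s0 \<omega> k)
     + ennreal (exp (lam * cc - kap * T))"
      using V_bound[of "mchain n v T ?s0 \<omega> k"] by simp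
  qed
  also have "\<dots> = ennreal (exp (lam * cc)) * emeasure zrp_space ?A + ennreal (exp (lam * cc + T)) * (\<integral>\<^sup>+\<omega>. U (mchain n v T ?s0 \<omega> k) \<partial>zrp_space)
     + ennreal (exp (lam * cc - kap * T))"
    using Am Um prob_space.emeasure_space_1[OF prob_space_zrp]
    by (simp add: nn_integral_add nn_integral_cmult nn_integral_cmult_indicator)
  also have "\<dots> \<le> ennreal (exp (lam * cc)) * emeasure zrp_space ?A + ennreal (exp (lam * cc + T)) * ennreal ((real n / (real n + 1)) ^ k)
     + ennreal (exp (lam * cc - kap * T))"
  proof -
    have "(\<integral>\<^sup>+\<omega>. U (mchain n v T ?s0 \<omega> k) \<partial>zrp_space) \<le> ennreal ((real n / (real n + 1)) ^ k) * U ?s0"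
      by (rule U_iter[OF gs0])
    also have "U ?s0 = 1" using gs0 by (simp add: U_def)
    finally show ?thesis by (intro add_mono mult_left_mono order_refl) auto
  qed
  finally show ?thesis .
qed

end

lemma space_zrp: "space zrp_space = UNIV"
  by (auto simp: zrp_space_def space_PiM zrp_drive_def space_pair_measure PiE_def extensional_def)

lemma card_eq_enn:
  fixes S :: "nat set"
  shows "card S = nat \<lfloor>enn2real (\<Sum>k. indicator S k :: ennreal)\<rfloor>"
proof -
  have "(\<Sum>k. indicator S k :: ennreal) = (\<integral>\<^sup>+k. indicator S k \<partial>count_space UNIV)"
    by (rule nn_integral_count_space_nat[symmetric])
  also have "\<dots> = emeasure (count_space UNIV) S" by (rule nn_integral_indicator) simp
  also have "\<dots> = (if finite S then of_nat (card S) else \<infinity>)" by (rule emeasure_count_space) simp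
  finally show ?thesis by auto
qed

lemma meas_jump: "(\<lambda>\<omega>. zrp_jump n eta0 \<omega> k) \<in> borel_measurable zrp_space"
proof -
  have "(\<lambda>\<omega>. zrp_jump n eta0 \<omega> k) = (\<lambda>\<omega>. fst (snd (mchain n 0 0 (eta0, 0, 0) \<omega> k)))"
    using mchain_zrp by auto
  then show ?thesis using meas_chain by metis
qed

lemma meas_zchain: "(\<lambda>\<omega>. zrp_chain n eta0 \<omega> k v) \<in> zrp_space \<rightarrow>\<^sub>M count_space UNIV"
proof -
  have e: "(\<lambda>\<omega>. zrp_chain n eta0 \<omega> k v) = (\<lambda>\<omega>. (\<lambda>e. e v) (fst (mchain n 0 0 (eta0, 0, 0) \<omega> k)))"
    using mchain_zrp by auto
  have "(\<lambda>\<omega>. fst (mchain n 0 0 (eta0, 0, 0) \<omega> k)) \<in> zrp_space \<rightarrow>\<^sub>M count_space (reach n eta0 k)"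
    using meas_chain[of n 0 0 "(eta0, 0, 0)" k] by simp
  moreover have "(\<lambda>e. e v) \<in> count_space (reach n eta0 k) \<rightarrow>\<^sub>M count_space (UNIV :: nat set)" by simp
  ultimately show ?thesis unfolding e by (rule measurable_compose)
qed

lemma meas_N:
  "(\<lambda>x. card {k. 1 \<le> k \<and> zrp_jump n eta0 (fst x) k \<le> snd x}) \<in> (zrp_space \<Otimes>\<^sub>M lborel) \<rightarrow>\<^sub>M count_space UNIV"
proof -
  have jm[measurable]: "(\<lambda>x. zrp_jump n eta0 (fst x) k) \<in> borel_measurable (zrp_space \<Otimes>\<^sub>M lborel)" for k
    using measurable_compose[OF measurable_fst[of zrp_space lborel] meas_jump[of n eta0 k]] by (simp add: comp_def)
  have im: "(\<lambda>x. indicator {k. 1 \<le> k \<and> zrp_jump n eta0 (fst x) k \<le> snd x} k :: ennreal) \<in> borel_measurable (zrp_space \<Otimes>\<^sub>M lborel)" for k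
  proof -
    have "(\<lambda>x. indicator {k. 1 \<le> k \<and> zrp_jump n eta0 (fst x) k \<le> snd x} k :: ennreal)
       = (\<lambda>x. if 1 \<le> k \<and> zrp_jump n eta0 (fst x) k \<le> snd x then 1 else 0)"
      by (auto simp: indicator_def)
    also have "\<dots> \<in> borel_measurable (zrp_space \<Otimes>\<^sub>M lborel)" by measurable
    finally show ?thesis .
  qed
  have sm: "(\<lambda>x. \<Sum>k. indicator {k. 1 \<le> k \<and> zrp_jump n eta0 (fst x) k \<le> snd x} k :: ennreal) \<in> borel_measurable (zrp_space \<Otimes>\<^sub>M lborel)"
    by (rule borel_measurable_suminf_order[OF im])
  have "(\<lambda>x. nat \<lfloor>enn2real (\<Sum>k. indicator {k. 1 \<le> k \<and> zrp_jump n eta0 (fst x) k \<le> snd x} k :: ennreal)\<rfloor>) \<in> (zrp_space \<Otimes>\<^sub>M lborel) \<rightarrow>\<^sub>M count_space UNIV"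
    using sm by measurable
  then show ?thesis by (subst card_eq_enn) 
qed

lemma meas_zrpv: "(\<lambda>x. zrp n eta0 (snd x) (fst x) v) \<in> (zrp_space \<Otimes>\<^sub>M lborel) \<rightarrow>\<^sub>M count_space UNIV"
proof -
  have "(\<lambda>x. zrp n eta0 (snd x) (fst x) v) = (\<lambda>x. (\<lambda>k x. zrp_chain n eta0 (fst x) k v) (card {k. 1 \<le> k \<and> zrp_jump n eta0 (fst x) k \<le> snd x}) x)"
    by (simp add: zrp_def)
  also have "\<dots> \<in> (zrp_space \<Otimes>\<^sub>M lborel) \<rightarrow>\<^sub>M count_space UNIV"
  proof (rule measurable_compose_countable'[OF _ meas_N])
    fix k :: nat
    show "(\<lambda>x. zrp_chain n eta0 (fst x) k v) \<in> (zrp_space \<Otimes>\<^sub>M lborel) \<rightarrow>\<^sub>M count_space UNIV"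
      using measurable_compose[OF measurable_fst[of zrp_space lborel] meas_zchain[of n eta0 k v]] by (simp add: comp_def)
  qed simp
  finally show ?thesis .
qed

lemma meas_Zfun: "(\<lambda>\<omega>. measure lborel {t \<in> {0..<T}. zrp n eta0 t \<omega> v = 0}) \<in> borel_measurable zrp_space"
proof -
  define Q where "Q = {x \<in> space (zrp_space \<Otimes>\<^sub>M lborel). snd x \<in> {0..<T} \<and> zrp n eta0 (snd x) (fst x) v = 0}"
  have zm[measurable]: "(\<lambda>x. zrp n eta0 (snd x) (fst x) v) \<in> (zrp_space \<Otimes>\<^sub>M lborel) \<rightarrow>\<^sub>M count_space UNIV"
    by (rule meas_zrpv)
  have Q: "Q \<in> sets (zrp_space \<Otimes>\<^sub>M lborel)" unfolding Q_def by measurable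
  have "(\<lambda>\<omega>. emeasure lborel (Pair \<omega> -` Q)) \<in> borel_measurable zrp_space"
    by (rule lborel.measurable_emeasure_Pair[OF Q])
  moreover have "Pair \<omega> -` Q = {t \<in> {0..<T}. zrp n eta0 t \<omega> v = 0}" for \<omega>
    by (auto simp: Q_def space_pair_measure space_zrp)
  ultimately have "(\<lambda>\<omega>. emeasure lborel {t \<in> {0..<T}. zrp n eta0 t \<omega> v = 0}) \<in> borel_measurable zrp_space" by simp
  then show ?thesis unfolding measure_def by measurable
qed

declare mchain.simps(2) [simp del]

lemma AE_good_omega: "AE \<omega> in zrp_space. \<forall>j. gw (\<omega> j)"
proof (subst AE_all_countable, intro allI)
  fix j :: nat
  show "AE \<omega> in zrp_space. gw (\<omega> j)"
    unfolding zrp_space_def by (rule AE_PiM_component[OF prob_drive _ AE_drive]) simp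
qed

context pot
begin

context
  fixes eta0 :: "nat \<Rightarrow> nat" and \<omega> :: "nat \<Rightarrow> real \<times> real \<times> real"
  assumes g0: "good n r eta0" and gom: "\<forall>j. gw (\<omega> j)"
begin

abbreviation "sk k \<equiv> mchain n v T (eta0, 0, 0) \<omega> k"
abbreviation "Jk k \<equiv> fst (snd (sk k))"
abbreviation "Ek k \<equiv> fst (sk k)"
abbreviation "Zk k \<equiv> snd (snd (sk k))"

lemma sk_good: "goodS (sk k)"
proof (induction k)
  case 0
  then show ?case using g0 by (simp add: goodS_def)
next
  case (Suc k)
  obtain eta J Z where s: "sk k = (eta, J, Z)" by (cases "sk k") auto
  show ?case unfolding mchain_Suc' s using step_goodS[of eta J Z "\<omega> k"] Suc gom s by simp
qed

lemma Jk_Suc: "Jk (Suc k) = Jk k + fst (\<omega> k) / real (card (occupied n (Ek k)))"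
  by (simp add: mchain_Suc' mstep_def Let_def)

lemma Zk_Suc: "Zk (Suc k) = Zk k + (if Ek k v = 0 then max 0 (min (Jk (Suc k)) T - Jk k) else 0)"
  by (simp add: mchain_Suc' mstep_def Let_def)

lemma Jk_lt: "Jk k < Jk (Suc k)"
proof -
  have g: "good n r (Ek k)" using sk_good[of k] by (simp add: goodS_def)
  have "0 < card (occupied n (Ek k))" using good_occ_pos[OF g r1] .
  moreover have "0 < fst (\<omega> k)" using gom by (simp add: gw_def)
  ultimately show ?thesis unfolding Jk_Suc by simp
qed

lemma Jk_le: assumes "i \<le> j" shows "Jk i \<le> Jk j"
proof -
  have "\<And>m. Jk m \<le> Jk (Suc m)" using Jk_lt less_imp_le by blast
  from lift_Suc_mono_le[of "\<lambda>k. Jk k", OF this assms] show ?thesis .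
qed

lemma Jk_nonneg: "0 \<le> Jk k"
  using sk_good[of k] by (simp add: goodS_def)

lemma zrp_on_interval:
  assumes "Jk k \<le> t" "t < Jk (Suc k)"
  shows "zrp n eta0 t \<omega> = Ek k"
proof -
  have "{i. 1 \<le> i \<and> zrp_jump n eta0 \<omega> i \<le> t} = {1..k}"
  proof (intro set_eqI iffI)
    fix i assume "i \<in> {i. 1 \<le> i \<and> zrp_jump n eta0 \<omega> i \<le> t}"
    then have i: "1 \<le> i" "Jk i \<le> t" using mchain_zrp[of n v T eta0 0 \<omega> i] by auto
    have "i \<le> k"
    proof (rule ccontr)
      assume "\<not> i \<le> k"
      then have "Suc k \<le> i" by simp
      then have "Jk (Suc k) \<le> Jk i" by (rule Jk_le)
      then show False using i assms by simp
    qed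
    then show "i \<in> {1..k}" using i by simp
  next
    fix i assume "i \<in> {1..k}"
    then have "i \<le> k" "1 \<le> i" by auto
    then have "Jk i \<le> Jk k" by (intro Jk_le)
    then show "i \<in> {i. 1 \<le> i \<and> zrp_jump n eta0 \<omega> i \<le> t}"
      using \<open>1 \<le> i\<close> assms mchain_zrp[of n v T eta0 0 \<omega> i] by auto
  qed
  then show ?thesis unfolding zrp_def using mchain_zrp[of n v T eta0 0 \<omega> k] by simp
qed

definition Cset :: "nat \<Rightarrow> real set" where
  "Cset k = {t. t < T \<and> Ek k v = 0 \<and> Jk k \<le> t \<and> t < Jk (Suc k)}"

definition Bset :: "nat \<Rightarrow> real set" where
  "Bset k = (\<Union>j<k. Cset j)"

lemma Cset_eq: "Cset k = (if Ek k v = 0 then {Jk k..<min (Jk (Suc k)) T} else {})"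
  by (auto simp: Cset_def)

lemma Cset_sets: "Cset k \<in> sets lborel"
  unfolding Cset_eq by simp

lemma Bset_sets: "Bset k \<in> sets lborel"
  unfolding Bset_def using Cset_sets by auto

lemma Bset_sub: "Bset k \<subseteq> {0..<T}"
proof
  fix t assume "t \<in> Bset k"
  then obtain j where j: "j < k" "t \<in> Cset j" by (auto simp: Bset_def)
  then have "t < T" "Jk j \<le> t" by (auto simp: Cset_def)
  moreover have "0 \<le> Jk j" by (rule Jk_nonneg)
  ultimately show "t \<in> {0..<T}" by simp
qed

lemma Bset_before: "Bset k \<subseteq> {..<Jk k}"
proof
  fix t assume "t \<in> Bset k"
  then obtain j where j: "j < k" "t \<in> Cset j" by (auto simp: Bset_def)
  then have "t < Jk (Suc j)" by (simp add: Cset_def)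
  moreover have "Jk (Suc j) \<le> Jk k" using j by (intro Jk_le) simp
  ultimately show "t \<in> {..<Jk k}" by simp
qed

lemma Bset_Suc: "Bset (Suc k) = Bset k \<union> Cset k"
  by (auto simp: Bset_def less_Suc_eq)

lemma fin_lborel: "A \<subseteq> {0..<T} \<Longrightarrow> emeasure lborel A \<noteq> \<infinity>"
proof -
  assume "A \<subseteq> {0..<T}"
  then have "emeasure lborel A \<le> emeasure lborel {0..<T}" by (intro emeasure_mono) auto
  also have "\<dots> = ennreal T" using T0 by simp
  finally have "emeasure lborel A \<le> ennreal T" .
  then show ?thesis unfolding infinity_ennreal_def by (rule neq_top_trans[OF ennreal_neq_top])
qed

lemma measure_Cset: "measure lborel (Cset k) = (if Ek k v = 0 then max 0 (min (Jk (Suc k)) T - Jk k) else 0)"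
proof (cases "Ek k v = 0")
  case True
  show ?thesis
  proof (cases "Jk k \<le> min (Jk (Suc k)) T")
    case le: True
    have "measure lborel {Jk k..<min (Jk (Suc k)) T} = min (Jk (Suc k)) T - Jk k"
      using le by (simp add: measure_def)
    moreover have "max 0 (min (Jk (Suc k)) T - Jk k) = min (Jk (Suc k)) T - Jk k" using le by simp
    ultimately show ?thesis unfolding Cset_eq using True by simp
  next
    case False
    have e: "{Jk k..<min (Jk (Suc k)) T} = {}" using False by auto
    have lt: "min (Jk (Suc k)) T < Jk k" using False by (simp only: not_le)
    have m: "max 0 (min (Jk (Suc k)) T - Jk k) = 0" by (rule max_absorb1) (use lt in linarith)
    show ?thesis unfolding Cset_eq using True e m by simp
  qed
next
  case False
  then show ?thesis by (simp add: Cset_eq)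
qed

lemma measure_Bset: "measure lborel (Bset k) = Zk k"
proof (induction k)
  case 0
  then show ?case by (simp add: Bset_def)
next
  case (Suc k)
  have C0: "Cset k \<subseteq> {0..<T}" using Bset_sub[of "Suc k"] Bset_Suc by blast
  have disj: "Bset k \<inter> Cset k = {}" using Bset_before[of k] by (auto simp: Cset_def)
  have "measure lborel (Bset (Suc k)) = measure lborel (Bset k) + measure lborel (Cset k)"
    unfolding Bset_Suc
    by (rule measure_Union[OF fin_lborel[OF Bset_sub] fin_lborel[OF C0] Bset_sets Cset_sets disj])
  also have "\<dots> = Zk (Suc k)" unfolding Suc.IH measure_Cset Zk_Suc ..
  finally show ?case .
qed

lemma Zset_sets: "{t \<in> {0..<T}. zrp n eta0 t \<omega> v = 0} \<in> sets lborel"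
proof -
  have "(\<lambda>t. zrp n eta0 t \<omega> v) \<in> lborel \<rightarrow>\<^sub>M count_space UNIV"
    using measurable_compose[OF measurable_Pair1'[of \<omega> zrp_space lborel] meas_zrpv[of n eta0 v]]
    by (simp add: space_zrp comp_def)
  then have "{t \<in> space lborel. zrp n eta0 t \<omega> v = 0} \<in> sets lborel" by measurable
  moreover have "{0..<T} \<in> sets lborel" by simp
  ultimately have "{0..<T} \<inter> {t \<in> space lborel. zrp n eta0 t \<omega> v = 0} \<in> sets lborel" by blast
  moreover have "{0..<T} \<inter> {t \<in> space lborel. zrp n eta0 t \<omega> v = 0} = {t \<in> {0..<T}. zrp n eta0 t \<omega> v = 0}" by auto
  ultimately show ?thesis by simp
qed

lemma Bset_Zset: "Bset k \<subseteq> {t \<in> {0..<T}. zrp n eta0 t \<omega> v = 0}"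
proof
  fix t assume t: "t \<in> Bset k"
  then have t0: "t \<in> {0..<T}" using Bset_sub by blast
  obtain j where j: "j < k" "t \<in> Cset j" using t by (auto simp: Bset_def)
  have c: "Ek j v = 0" "Jk j \<le> t" "t < Jk (Suc j)" using j(2) unfolding Cset_def by auto
  have "zrp n eta0 t \<omega> = Ek j" by (rule zrp_on_interval[OF c(2) c(3)])
  then have "zrp n eta0 t \<omega> v = 0" using c(1) by simp
  then show "t \<in> {t \<in> {0..<T}. zrp n eta0 t \<omega> v = 0}" using t0 by blast
qed

lemma Zk_le: "Zk k \<le> measure lborel {t \<in> {0..<T}. zrp n eta0 t \<omega> v = 0}"
proof -
  have f: "emeasure lborel {t \<in> {0..<T}. zrp n eta0 t \<omega> v = 0} \<noteq> \<infinity>"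
    by (rule fin_lborel) auto
  have "{t \<in> {0..<T}. zrp n eta0 t \<omega> v = 0} \<in> fmeasurable lborel"
  proof (rule fmeasurableI[OF Zset_sets])
    have "emeasure lborel {t \<in> {0..<T}. zrp n eta0 t \<omega> v = 0} \<noteq> top"
      using f unfolding infinity_ennreal_def .
    then show "emeasure lborel {t \<in> {0..<T}. zrp n eta0 t \<omega> v = 0} < \<infinity>"
      unfolding infinity_ennreal_def by (rule less_top[THEN iffD1])
  qed
  then have "measure lborel (Bset k) \<le> measure lborel {t \<in> {0..<T}. zrp n eta0 t \<omega> v = 0}"
    by (rule measure_mono_fmeasurable[OF Bset_Zset Bset_sets])
  then show ?thesis by (simp only: measure_Bset)
qed

end

end

lemma exp_quad:
  fixes x :: real assumes x: "0 \<le> x"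
  shows "1 + x + x^2 / 2 \<le> exp x"
proof -
  have "(\<Sum>n\<le>2. x ^ n / fact n) \<le> exp x"
    using x summable_exp_generic[of x]
    by (auto simp: exp_def divide_inverse ac_simps intro!: sum_le_suminf)
  moreover have "(\<Sum>n\<le>2. x ^ n / fact n) = 1 + x + x^2 / 2"
    by (simp add: numeral_2_eq_2 fact_Suc)
  ultimately show ?thesis by simp
qed

lemma cosh_bound:
  fixes x :: real assumes x: "0 \<le> x"
  shows "x^2 / 2 \<le> exp x + exp (- x) - 2"
  using exp_quad[OF x] exp_ge_add_one_self[of "- x"] by simp

lemma pot_inst:
  fixes L :: real
  assumes n: "2 \<le> n" and r: "1 \<le> r" and v: "v < n" and L: "1 \<le> L"
  shows "pot n r v (L^2) (24 / L) (6 / L) ((6 / L)^2 / 2) (L / 24)"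
proof
  show "2 \<le> n" "1 \<le> r" "v < n" by fact+
  show "0 \<le> 6 / L" "0 \<le> (6 / L)^2 / 2" "0 \<le> 24 / L" "0 < L / 24" "0 < L^2" using L by auto
  show "(6 / L)^2 / 2 \<le> exp (6 / L) + exp (- (6 / L)) - 2"
    by (rule cosh_bound) (use L in simp)
  show "1 - exp (- (6 / L)) \<le> 24 / L - (6 / L)^2 / 2"
  proof -
    have "1 - exp (- (6 / L)) \<le> 6 / L" using exp_ge_add_one_self[of "- (6 / L)"] by simp
    moreover have "(6 / L)^2 / 2 \<le> 18 / L"
    proof -
      have "(6 / L)^2 / 2 = 18 / L * (1 / L)" by (simp add: power2_eq_square field_simps)
      also have "\<dots> \<le> 18 / L * 1" using L by (intro mult_left_mono) auto
      finally show ?thesis by simp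
    qed
    ultimately show ?thesis by simp
  qed
qed

lemma final_bound:
  fixes n r v :: nat and eta0 :: "nat \<Rightarrow> nat"
  assumes n: "2 \<le> n" and r: "1 \<le> r" and z: "\<forall>i. n \<le> i \<longrightarrow> eta0 i = 0" and s: "(\<Sum>i<n. eta0 i) = r"
    and v: "v < n" and X0: "real (eta0 v) \<le> 2 * (real r / real n + 1)"
  shows "exp (-13) / 48 * (real r / real n + 1) \<le> integral\<^sup>L zrp_space
     (\<lambda>\<omega>. min (measure lborel {t \<in> {0..<(real r / real n + 1)\<^sup>2}. zrp n eta0 t \<omega> v = 0}) (1 / 24 * (real r / real n + 1)))"
proof -
  define L where "L = real r / real n + 1"
  have L1: "1 \<le> L" by (simp add: L_def)
  have L0: "0 < L" using L1 by simp
  define T where "T = L^2"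
  define lam where "lam = 24 / L"
  define mu where "mu = 6 / L"
  define kap where "kap = (6 / L)^2 / 2"
  define cc where "cc = L / 24"
  interpret P: pot n r v T lam mu kap cc
    unfolding T_def lam_def mu_def kap_def cc_def by (rule pot_inst[OF n r v L1])
  interpret PS: prob_space zrp_space by (rule prob_space_zrp)
  have g0: "good n r eta0" using z s by (simp add: good_def)
  define \<rho> where "\<rho> = real n / (real n + 1)"
  have \<rho>1: "\<rho> < 1" by (simp add: \<rho>_def)
  have \<rho>0: "0 \<le> \<rho>" by (simp add: \<rho>_def)
  obtain k where k: "\<rho> ^ k < exp (- 18 - T)"
    using real_arch_pow_inv[of "exp (- 18 - T)" \<rho>] \<rho>1 by auto
  define A where "A = {\<omega> \<in> space zrp_space. cc \<le> snd (snd (mchain n v T (eta0, 0, 0) \<omega> k))}"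
  have Zm[measurable]: "(\<lambda>\<omega>. snd (snd (mchain n v T (eta0, 0, 0) \<omega> k))) \<in> borel_measurable zrp_space"
    using meas_chain by blast
  have Am: "A \<in> sets zrp_space" unfolding A_def by measurable
  define p where "p = PS.prob A"
  have p0: "0 \<le> p" by (simp add: p_def)
  have lc: "lam * cc = 1" using L0 by (simp add: lam_def cc_def)
  have kT: "kap * T = 18" using L0 by (simp add: kap_def T_def power2_eq_square field_simps)
  have muX: "mu * real (eta0 v) \<le> 12"
  proof -
    have "mu * real (eta0 v) \<le> mu * (2 * L)" using X0 L0 by (intro mult_left_mono) (auto simp: mu_def L_def)
    also have "\<dots> = 12" using L0 by (simp add: mu_def)
    finally show ?thesis .
  qed
  have mb: "ennreal (exp (- mu * real (eta0 v))) \<le> ennreal (exp (lam * cc)) * emeasure zrp_space A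
     + ennreal (exp (lam * cc + T)) * ennreal (\<rho> ^ k) + ennreal (exp (lam * cc - kap * T))"
    using P.main_bound[OF g0, of k] unfolding A_def \<rho>_def .
  also have "\<dots> = ennreal (exp 1 * p + exp (1 + T) * \<rho> ^ k + exp (- 17))"
    using p0 \<rho>0 by (simp add: lc kT PS.emeasure_eq_measure p_def ennreal_mult[symmetric] ennreal_plus[symmetric] del: ennreal_plus)
  finally have mb2: "exp (- mu * real (eta0 v)) \<le> exp 1 * p + exp (1 + T) * \<rho> ^ k + exp (- 17)"
    using p0 \<rho>0 by (subst (asm) ennreal_le_iff) (auto intro!: add_nonneg_nonneg)
  have e12: "exp (- 12) \<le> exp (- mu * real (eta0 v))" using muX by simp
  have ek: "exp (1 + T) * \<rho> ^ k \<le> exp (- 17)"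
  proof -
    have "exp (1 + T) * \<rho> ^ k \<le> exp (1 + T) * exp (- 18 - T)" using k by (intro mult_left_mono) auto
    also have "\<dots> = exp (- 17)" by (simp add: exp_add[symmetric])
    finally show ?thesis .
  qed
  have e5: "2 * exp (- 17) \<le> exp (- 12::real) / 2"
  proof -
    have "4 \<le> exp (5::real)" using exp_ge_add_one_self[of 5] by simp
    then have "4 * exp (- 17) \<le> exp 5 * exp (- 17::real)" by (intro mult_right_mono) auto
    also have "\<dots> = exp (- 12)" by (simp add: exp_add[symmetric])
    finally show ?thesis by simp
  qed
  have pbound: "exp (- 13) / 2 \<le> p"
  proof -
    have "exp (- 12) / 2 \<le> exp 1 * p" using mb2 e12 ek e5 by linarith
    then have "exp (- 12) / 2 / exp 1 \<le> p" by (simp add: divide_le_eq mult.commute)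
    moreover have "exp (- 12) / 2 / exp 1 = (exp (- 13) / 2 :: real)"
    proof -
      have "exp (- 12) / exp 1 = (exp (- 13) :: real)" using exp_diff[of "- 12" 1, symmetric] by simp
      then show ?thesis by simp
    qed
    ultimately show ?thesis by simp
  qed
  define f where "f \<omega> = min (measure lborel {t \<in> {0..<T}. zrp n eta0 t \<omega> v = 0}) cc" for \<omega>
  have fm: "f \<in> borel_measurable zrp_space" unfolding f_def using meas_Zfun[of T n eta0 v] by measurable
  have f0: "0 \<le> f \<omega>" for \<omega> using L0 by (simp add: f_def cc_def)
  have fcc: "f \<omega> \<le> cc" for \<omega> by (simp add: f_def)
  have fint: "integrable zrp_space f"
    by (rule PS.integrable_const_bound[where B=cc]) (use f0 fcc in simp, rule fm)
  have "ennreal (cc * p) = ennreal cc * emeasure zrp_space A"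
  proof -
    have c0: "0 \<le> cc" using L0 by (simp add: cc_def)
    show ?thesis unfolding PS.emeasure_eq_measure p_def[symmetric] by (rule ennreal_mult[OF c0 p0])
  qed
  also have "\<dots> = (\<integral>\<^sup>+\<omega>. ennreal cc * indicator A \<omega> \<partial>zrp_space)"
    by (rule nn_integral_cmult_indicator[OF Am, symmetric])
  also have "\<dots> \<le> (\<integral>\<^sup>+\<omega>. ennreal (f \<omega>) \<partial>zrp_space)"
  proof (rule nn_integral_mono_AE)
    show "AE \<omega> in zrp_space. ennreal cc * indicator A \<omega> \<le> ennreal (f \<omega>)"
      using AE_good_omega
    proof eventually_elim
      case (elim \<omega>)
      show ?case
      proof (cases "\<omega> \<in> A")
        case True
        then have "cc \<le> snd (snd (mchain n v T (eta0, 0, 0) \<omega> k))" by (simp add: A_def)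
        also have "\<dots> \<le> measure lborel {t \<in> {0..<T}. zrp n eta0 t \<omega> v = 0}"
          by (rule P.Zk_le[OF g0 elim])
        finally have "f \<omega> = cc" by (simp add: f_def)
        then show ?thesis using True by simp
      next
        case False
        then show ?thesis by simp
      qed
    qed
  qed
  also have "\<dots> = ennreal (integral\<^sup>L zrp_space f)"
    by (rule nn_integral_eq_integral[OF fint]) (simp add: f0)
  finally have main: "cc * p \<le> integral\<^sup>L zrp_space f"
  proof -
    have inn: "0 \<le> integral\<^sup>L zrp_space f" by (rule Bochner_Integration.integral_nonneg) (simp add: f0)
    assume "ennreal (cc * p) \<le> ennreal (integral\<^sup>L zrp_space f)"
    then show ?thesis using inn by (subst (asm) ennreal_le_iff) auto
  qed
  have "exp (- 13) / 48 * L \<le> cc * p"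
  proof -
    have "exp (- 13) / 48 * L = cc * (exp (- 13) / 2)" by (simp add: cc_def)
    also have "\<dots> \<le> cc * p" using pbound L0 by (intro mult_left_mono) (auto simp: cc_def)
    finally show ?thesis .
  qed
  also note main
  also have "f = (\<lambda>\<omega>. min (measure lborel {t \<in> {0..<(real r / real n + 1)\<^sup>2}. zrp n eta0 t \<omega> v = 0}) (1 / 24 * (real r / real n + 1)))"
    by (simp add: f_def T_def L_def cc_def fun_eq_iff)
  finally show ?thesis by (simp add: L_def)
qed

theorem lemma6:
  "\<exists>C::real > 0. \<exists>M::real > 0. \<forall>(n::nat) (r::nat) (eta0::nat \<Rightarrow> nat) (v::nat).
     2 \<le> n \<longrightarrow> 1 \<le> r \<longrightarrow>
     (\<forall>i. n \<le> i \<longrightarrow> eta0 i = 0) \<longrightarrow> (\<Sum>i<n. eta0 i) = r \<longrightarrow>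
     v < n \<longrightarrow> real (eta0 v) \<le> 2 * (real r / real n + 1) \<longrightarrow>
     (let \<rho> = real r / real n;
          Z = (\<lambda>\<omega>. measure lborel {t \<in> {0..<(\<rho> + 1)\<^sup>2}. zrp n eta0 t \<omega> v = 0})
      in C * (\<rho> + 1) \<le> integral\<^sup>L zrp_space (\<lambda>\<omega>. min (Z \<omega>) (M * (\<rho> + 1))))"
proof -
  have H: "exp (-13) / 48 * (real r / real n + 1) \<le> integral\<^sup>L zrp_space
     (\<lambda>\<omega>. min (measure lborel {t \<in> {0..<(real r / real n + 1)\<^sup>2}. zrp n eta0 t \<omega> v = 0}) (1 / 24 * (real r / real n + 1)))"
    if "2 \<le> n" "1 \<le> r" "\<forall>i. n \<le> i \<longrightarrow> eta0 i = 0" "(\<Sum>i<n. eta0 i) = r" "v < n"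
       "real (eta0 v) \<le> 2 * (real r / real n + 1)" for n r :: nat and eta0 :: "nat \<Rightarrow> nat" and v :: nat
    by (rule final_bound[OF that])
  show ?thesis
  proof (intro exI conjI allI impI)
    show "(0::real) < exp (-13) / 48" by simp
    show "(0::real) < 1 / 24" by simp
    fix n r :: nat and eta0 :: "nat \<Rightarrow> nat" and v :: nat
    assume a: "2 \<le> n" "1 \<le> r" "\<forall>i. n \<le> i \<longrightarrow> eta0 i = 0" "(\<Sum>i<n. eta0 i) = r" "v < n"
       "real (eta0 v) \<le> 2 * (real r / real n + 1)"
    show "let \<rho> = real r / real n;
          Z = (\<lambda>\<omega>. measure lborel {t \<in> {0..<(\<rho> + 1)\<^sup>2}. zrp n eta0 t \<omega> v = 0})
      in exp (-13) / 48 * (\<rho> + 1) \<le> integral\<^sup>L zrp_space (\<lambda>\<omega>. min (Z \<omega>) (1 / 24 * (\<rho> + 1)))"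
      unfolding Let_def by (rule H[OF a])
  qed
qed

end
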